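(* Let $u_0\in L^1(\Omega)$ satisfy $u_0\ge0$ a.e., $\int_\Omega u_0>0$ and $\int_\Omega\Gamma(u_0)<\infty$, let $V$ be Lipschitz continuous on $\Omega$, let $\mathbf u^0\in W_{\mathcal D}$ be defined by $u^0_\beta=\frac1{m_\beta}\int_{\omega_\beta}u_0\,dx$ for $\beta\in\mathcal M\cup\mathcal V$, and $\mathbf V=(V(x_K),V(x_s))_{K\in\mathcal M,s\in\mathcal V}$. Then there exists $C$ depending only on $\|u_0\|_{L^1(\Omega)}$ and $\|\nabla V\|_{L^\infty(\Omega)^d}$ such that $$\mathcal E_{\mathcal D}(\mathbf u^0)\le\mathcal E(u_0)+Ch_{\mathcal T}\le\mathcal E(u_0)+C\operatorname{diam}(\Omega).$$ In particular $\mathbf u^0\in W^{\rm en}_{\mathcal D}$.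
   Context: $\Omega\subset\mathbb R^d$ ($d\in\{2,3\}$) connected bounded open polyhedral. $p$: absolutely continuous, increasing on $(0,\infty)$, $p\in L^1_{loc}(\mathbb R_+)$, $p(u)\to+\infty$ as $u\to\infty$; if $p(0)=\lim_{u\downarrow0}p(u)$ is finite, $p(u)=2p(0)-p(-u)$ for $u\le0$; $I_p=(0,\infty)$ if $p(0)=-\infty$, else $\mathbb R$. $\Gamma(u)=\int_1^u(p(a)-p(1))da$ on $\bar I_p$, $\Gamma(u)=+\infty$ if $p(0)=-\infty$ and $u<0$ (convex, nonnegative). $\mathcal E(u)=\int_\Omega(\Gamma(u)+uV)dx$. Mesh: a discretization $\mathcal D$ with cells $\mathcal M$ (disjoint open polyhedra, closures covering $\bar\Omega$, each star-shaped w.r.t. $x_K$), vertices $\mathcal V$ at $x_s$, $\mathcal V_K$ the vertices of $K$, $\mathcal M_s$ the cells containing $s$; simplicial submesh $\mathcal T$ obtained by splitting each cell into simplices having $x_K$ as a vertex and face (sub)elements as base; $h_{\mathcal T}$ the maximal diameter of the simplices of $\mathcal T$. Mass lumping: weights $\alpha_{K,s}\ge0$ with $\sum_{s\in\mathcal V_K}\alpha_{K,s}\le1$; $m_{K,s}=\alpha_{K,s}|K|$, $m_s=\sum_{K\in\mathcal M_s}m_{K,s}$, $m_K=|K|-\sum_sm_{K,s}$, all assumed positive; disjoint open $\omega_K,\omega_{K,s}\subset K$ with closures covering $\bar K$ and $|\omega_K|=m_K$, $|\omega_{K,s}|=m_{K,s}$; $\omega_s=\bigcup_{K\in\mathcal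 M_s}\omega_{K,s}$. $W_{\mathcal D}=\{(v_K,v_s)\}$, $\pi_{\mathcal D}\mathbf v=\sum_Kv_K\mathbf 1_{\omega_K}+\sum_sv_s\mathbf 1_{\omega_s}$. $\mathcal E_{\mathcal D}(\mathbf v)=\int_\Omega(\Gamma(\pi_{\mathcal D}\mathbf v)+\pi_{\mathcal D}\mathbf v\,\pi_{\mathcal D}\mathbf V)dx$, $W^{\rm en}_{\mathcal D}=\{\mathbf v:\mathcal E_{\mathcal D}(\mathbf v)<\infty\}$. *)

theory Defs
  imports "HOL-Analysis.Analysis"
begin

definition abs_cont_on_interval :: "(real \<Rightarrow> real) \<Rightarrow> real \<Rightarrow> real \<Rightarrow> bool" where
  "abs_cont_on_interval f a b \<longleftrightarrow>
     (\<forall>\<epsilon>>0. \<exists>\<delta>>0. \<forall>(n::nat) (l::nat \<Rightarrow> real) (r::nat \<Rightarrow> real).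
        (\<forall>i<n. a \<le> l i \<and> l i \<le> r i \<and> r i \<le> b) \<and>
        (\<forall>i<n. \<forall>j<n. i \<noteq> j \<longrightarrow> {l i<..<r i} \<inter> {l j<..<r j} = {}) \<and>
        (\<Sum>i<n. r i - l i) < \<delta>
        \<longrightarrow> (\<Sum>i<n. \<bar>f (r i) - f (l i)\<bar>) < \<epsilon>)"

definition pzero :: "(real \<Rightarrow> real) \<Rightarrow> ereal" where
  "pzero p = Lim (at_right 0) (\<lambda>u. ereal (p u))"

definition admissible_p :: "(real \<Rightarrow> real) \<Rightarrow> bool" where
  "admissible_p p \<longleftrightarrow>
     (\<forall>a b. 0 < a \<longrightarrow> a \<le> b \<longrightarrow> abs_cont_on_interval p a b) \<and>
     strict_mono_on {0<..} p \<and>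
     (\<forall>R\<ge>0. p integrable_on {0..R}) \<and>
     filterlim p at_top at_top \<and>
     (pzero p \<noteq> -\<infinity> \<longrightarrow> (\<forall>u\<le>0. p u = 2 * real_of_ereal (pzero p) - p (- u)))"

definition Gam :: "(real \<Rightarrow> real) \<Rightarrow> real \<Rightarrow> ereal" where
  "Gam p u =
     (if pzero p = -\<infinity> \<and> u < 0 then \<infinity>
      else ereal (if 1 \<le> u then integral {1..u} (\<lambda>a. p a - p 1)
                  else - integral {u..1} (\<lambda>a. p a - p 1)))"

text \<open>E(u) = int_Omega (Gamma(u) + u V) dx; Gamma is nonnegative and u V is integrable
  in all uses, so the integral is split into a nonnegative part and a Lebesgue integral.\<close>
definition Energy :: "(real \<Rightarrow> real) \<Rightarrow> 'a::euclidean_space set \<Rightarrow> ('a \<Rightarrow> real) \<Rightarrow> ('a \<Rightarrow> real) \<Rightarrow> ereal" where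
  "Energy p \<Omega> V u =
     enn2ereal (\<integral>\<^sup>+ x\<in>\<Omega>. e2ennreal (Gam p (u x)) \<partial>lebesgue)
     + ereal (LINT x:\<Omega>|lebesgue. u x * V x)"

definition polyhedral_open :: "'a::euclidean_space set \<Rightarrow> bool" where
  "polyhedral_open S \<longleftrightarrow> open S \<and>
     (\<exists>P. finite P \<and> (\<forall>Q\<in>P. polytope Q) \<and> closure S = \<Union>P)"

definition polyhedral_cell :: "'a::euclidean_space set \<Rightarrow> bool" where
  "polyhedral_cell K \<longleftrightarrow> polyhedral_open K \<and> K = interior (closure K)"

definition star_shaped_wrt :: "'a::euclidean_space set \<Rightarrow> 'a \<Rightarrow> bool" where
  "star_shaped_wrt K c \<longleftrightarrow> c \<in> K \<and> (\<forall>y\<in>K. closed_segment c y \<subseteq> K)"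

definition cells_of :: "'a set set \<Rightarrow> ('a set \<Rightarrow> 'a set) \<Rightarrow> 'a \<Rightarrow> 'a set set" where
  "cells_of \<M> VK s = {K \<in> \<M>. s \<in> VK K}"

definition mKs :: "('a::euclidean_space set \<Rightarrow> 'a \<Rightarrow> real) \<Rightarrow> 'a set \<Rightarrow> 'a \<Rightarrow> real" where
  "mKs \<alpha> K s = \<alpha> K s * measure lebesgue K"

definition mV :: "'a::euclidean_space set set \<Rightarrow> ('a set \<Rightarrow> 'a set) \<Rightarrow> ('a set \<Rightarrow> 'a \<Rightarrow> real) \<Rightarrow> 'a \<Rightarrow> real" where
  "mV \<M> VK \<alpha> s = (\<Sum>K\<in>cells_of \<M> VK s. mKs \<alpha> K s)"

definition mC :: "('a::euclidean_space set \<Rightarrow> 'a set) \<Rightarrow> ('a set \<Rightarrow> 'a \<Rightarrow> real) \<Rightarrow> 'a set \<Rightarrow> real" where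
  "mC VK \<alpha> K = measure lebesgue K - (\<Sum>s\<in>VK K. mKs \<alpha> K s)"

definition omega_v :: "'a set set \<Rightarrow> ('a set \<Rightarrow> 'a set) \<Rightarrow> ('a set \<Rightarrow> 'a \<Rightarrow> 'a set) \<Rightarrow> 'a \<Rightarrow> 'a set" where
  "omega_v \<M> VK \<omega>Ks s = (\<Union>K\<in>cells_of \<M> VK s. \<omega>Ks K s)"

definition h_mesh :: "'a::euclidean_space set set \<Rightarrow> real" where
  "h_mesh \<T> = Max (diameter ` \<T>)"

text \<open>Cells are sets K in M with centre xc K; vertices are identified with their
  locations x_s (the set Vt); VK K are the vertices of K; simplices of T are closed
  d-simplices; \<alpha> K s the lumping weights; \<omega>K K and \<omega>Ks K s the lumping subsets.\<close>
definition discretization ::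
  "'a::euclidean_space set \<Rightarrow> 'a set set \<Rightarrow> ('a set \<Rightarrow> 'a) \<Rightarrow> 'a set \<Rightarrow> ('a set \<Rightarrow> 'a set)
   \<Rightarrow> 'a set set \<Rightarrow> ('a set \<Rightarrow> 'a \<Rightarrow> real) \<Rightarrow> ('a set \<Rightarrow> 'a set) \<Rightarrow> ('a set \<Rightarrow> 'a \<Rightarrow> 'a set) \<Rightarrow> bool" where
  "discretization \<Omega> \<M> xc Vt VK \<T> \<alpha> \<omega>K \<omega>Ks \<longleftrightarrow>
     \<comment> \<open>cells\<close>
     finite \<M> \<and> \<M> \<noteq> {} \<and>
     (\<forall>K\<in>\<M>. polyhedral_cell K \<and> K \<subseteq> \<Omega> \<and> star_shaped_wrt K (xc K)) \<and>
     (\<forall>K\<in>\<M>. \<forall>L\<in>\<M>. K \<noteq> L \<longrightarrow> K \<inter> L = {}) \<and>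
     \<Union>(closure ` \<M>) = closure \<Omega> \<and>
     \<comment> \<open>vertices\<close>
     finite Vt \<and> Vt = \<Union>(VK ` \<M>) \<and>
     (\<forall>K\<in>\<M>. VK K \<subseteq> frontier K) \<and>
     \<comment> \<open>simplicial submesh\<close>
     finite \<T> \<and>
     (\<forall>T\<in>\<T>. int DIM('a) simplex T) \<and>
     (\<forall>T\<in>\<T>. \<forall>T'\<in>\<T>. T \<noteq> T' \<longrightarrow> interior T \<inter> interior T' = {}) \<and>
     (\<forall>T\<in>\<T>. \<exists>K\<in>\<M>. T \<subseteq> closure K \<and> xc K extreme_point_of T \<and>
        convex hull {v. v extreme_point_of T \<and> v \<noteq> xc K} \<subseteq> frontier K) \<and>
     (\<forall>K\<in>\<M>. closure K = \<Union>{T\<in>\<T>. T \<subseteq> closure K}) \<and>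
     (\<forall>K\<in>\<M>. \<forall>s\<in>VK K. \<exists>T\<in>\<T>. T \<subseteq> closure K \<and> s extreme_point_of T) \<and>
     \<comment> \<open>mass lumping\<close>
     (\<forall>K\<in>\<M>. (\<forall>s\<in>VK K. \<alpha> K s \<ge> 0) \<and> (\<Sum>s\<in>VK K. \<alpha> K s) \<le> 1) \<and>
     (\<forall>K\<in>\<M>. \<forall>s\<in>VK K. mKs \<alpha> K s > 0) \<and>
     (\<forall>s\<in>Vt. mV \<M> VK \<alpha> s > 0) \<and>
     (\<forall>K\<in>\<M>. mC VK \<alpha> K > 0) \<and>
     (\<forall>K\<in>\<M>. open (\<omega>K K) \<and> \<omega>K K \<subseteq> K \<and> measure lebesgue (\<omega>K K) = mC VK \<alpha> K \<and>
        (\<forall>s\<in>VK K. open (\<omega>Ks K s) \<and> \<omega>Ks K s \<subseteq> K \<and>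
                   measure lebesgue (\<omega>Ks K s) = mKs \<alpha> K s \<and> \<omega>K K \<inter> \<omega>Ks K s = {}) \<and>
        (\<forall>s\<in>VK K. \<forall>s'\<in>VK K. s \<noteq> s' \<longrightarrow> \<omega>Ks K s \<inter> \<omega>Ks K s' = {}) \<and>
        closure K = closure (\<omega>K K) \<union> (\<Union>s\<in>VK K. closure (\<omega>Ks K s)))"

definition piD :: "'a set set \<Rightarrow> 'a set \<Rightarrow> ('a set \<Rightarrow> 'a set) \<Rightarrow> ('a set \<Rightarrow> 'a set)
   \<Rightarrow> ('a set \<Rightarrow> 'a \<Rightarrow> 'a set) \<Rightarrow> ('a set \<Rightarrow> real) \<Rightarrow> ('a \<Rightarrow> real) \<Rightarrow> 'a \<Rightarrow> real" where
  "piD \<M> Vt VK \<omega>K \<omega>Ks vK vs x =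
     (\<Sum>K\<in>\<M>. vK K * indicator (\<omega>K K) x) + (\<Sum>s\<in>Vt. vs s * indicator (omega_v \<M> VK \<omega>Ks s) x)"

end

theory Submission
  imports Defs
begin

definition oi :: "(real \<Rightarrow> real) \<Rightarrow> real \<Rightarrow> real \<Rightarrow> real" where
  "oi f a b = (if a \<le> b then integral {a..b} f else - integral {b..a} f)"

lemma oi_add:
  assumes "f integrable_on {min a (min b c)..max a (max b c)}"
  shows "oi f a b + oi f b c = oi f a c"
proof -
  have I: "f integrable_on {x..y}" if "min a (min b c) \<le> x" "y \<le> max a (max b c)" for x y
    using integrable_subinterval_real[OF assms, of x y] that by (cases "x \<le> y") auto
  have C: "integral {x..y} f + integral {y..z} f = integral {x..z} f"
    if "x \<le> y" "y \<le> z" "min a (min b c) \<le> x" "z \<le> max a (max b c)" for x y z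
    using Henstock_Kurzweil_Integration.integral_combine[OF that(1,2) I[OF that(3,4)]] .
  show ?thesis unfolding oi_def
    using C[of a b c] C[of a c b] C[of b a c] C[of b c a] C[of c a b] C[of c b a]
    by (auto split: if_splits simp: min_def max_def)
qed

definition Sp :: "(real \<Rightarrow> real) \<Rightarrow> real set" where
  "Sp p = (if pzero p = -\<infinity> then {0<..} else UNIV)"

lemma pzero_Inf:
  assumes "admissible_p p"
  shows "pzero p = Inf ((\<lambda>t. ereal (p t)) ` {0<..})"
proof -
  let ?I = "Inf ((\<lambda>t. ereal (p t)) ` {0<..})"
  have sm: "strict_mono_on {0<..} p" using assms by (simp add: admissible_p_def)
  have "((\<lambda>u. ereal (p u)) \<longlongrightarrow> ?I) (at_right 0)"
  proof (rule order_tendstoI)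
    fix a assume "a < ?I"
    then have "a < ereal (p u)" if "u > 0" for u
      using that by (meson INF_lower greaterThan_iff less_le_trans)
    then show "eventually (\<lambda>u. a < ereal (p u)) (at_right 0)"
      by (auto simp: eventually_at_right_field intro!: exI[of _ 1])
  next
    fix a assume "?I < a"
    then obtain t where t: "t > 0" "ereal (p t) < a" by (auto simp: Inf_less_iff)
    have "ereal (p u) < a" if "0 < u" "u < t" for u
    proof -
      have "p u < p t" using sm that t(1) by (auto simp: strict_mono_on_def)
      then show ?thesis using t(2) by (meson ereal_less_eq(3) less_imp_le order_le_less_trans)
    qed
    then show "eventually (\<lambda>u. ereal (p u) < a) (at_right 0)"
      using t(1) by (auto simp: eventually_at_right_field intro!: exI[of _ t])
  qed
  then show ?thesis unfolding pzero_def by (intro tendsto_Lim) auto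
qed

lemma pzero_le:
  assumes "admissible_p p" "t > 0"
  shows "pzero p \<le> ereal (p t)"
  unfolding pzero_Inf[OF assms(1)] by (rule INF_lower) (use assms in simp)

lemma pzero_finite:
  assumes "admissible_p p" "pzero p \<noteq> -\<infinity>"
  shows "pzero p = ereal (real_of_ereal (pzero p))"
  using pzero_le[OF assms(1), of 1] assms(2) by (cases "pzero p") auto

lemma p_mono:
  assumes "admissible_p p" "x \<in> Sp p" "y \<in> Sp p" "x \<le> y"
  shows "p x \<le> p y"
proof -
  have sm: "strict_mono_on {0<..} p" using assms by (simp add: admissible_p_def)
  have pos: "0 < x \<Longrightarrow> 0 < y \<Longrightarrow> x \<le> y \<Longrightarrow> p x \<le> p y" for x y
    using sm by (metis greaterThan_iff order_le_less strict_mono_onD)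
  show ?thesis
  proof (cases "pzero p = -\<infinity>")
    case True then show ?thesis using assms pos by (auto simp: Sp_def)
  next
    case False
    define c where "c = real_of_ereal (pzero p)"
    have pz: "pzero p = ereal c" using pzero_finite[OF assms(1) False] by (simp add: c_def)
    have refl: "p u = 2 * c - p (- u)" if "u \<le> 0" for u
      using assms(1) False that by (simp add: admissible_p_def c_def)
    have p0: "p 0 = c" using refl[of 0] by simp
    have cle: "c \<le> p t" if "t \<ge> 0" for t
    proof (cases "t = 0")
      case True then show ?thesis using p0 by simp
    next
      case False then show ?thesis using pzero_le[OF assms(1), of t] that pz by simp
    qed
    have nn: "0 \<le> x \<Longrightarrow> x \<le> y \<Longrightarrow> p x \<le> p y" for x y
      using pos[of x y] cle[of y] p0 by (cases "x = 0") auto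
    show ?thesis
    proof (cases "0 \<le> x")
      case True then show ?thesis using nn assms(4) by simp
    next
      case x: False
      show ?thesis
      proof (cases "0 \<le> y")
        case True
        then show ?thesis using refl[of x] x cle[of "-x"] cle[of y] by simp
      next
        case False
        then show ?thesis using refl[of x] refl[of y] x nn[of "-y" "-x"] assms(4) by simp
      qed
    qed
  qed
qed

definition qf :: "(real \<Rightarrow> real) \<Rightarrow> real \<Rightarrow> real" where
  "qf p a = p a - p 1"

lemma p_integrable:
  assumes "admissible_p p" "a \<le> b" "0 \<le> a \<or> pzero p \<noteq> -\<infinity>"
  shows "p integrable_on {a..b}"
proof -
  have int0: "p integrable_on {0..R}" if "R \<ge> 0" for R
    using assms(1) that by (simp add: admissible_p_def)
  show ?thesis
  proof (cases "0 \<le> a")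
    case True
    then show ?thesis using int0[of b] assms(2) by (auto intro: integrable_subinterval_real)
  next
    case False
    then have fin: "pzero p \<noteq> -\<infinity>" using assms(3) by simp
    define c where "c = real_of_ereal (pzero p)"
    have refl: "p u = 2 * c - p (- u)" if "u \<le> 0" for u
      using assms(1) fin that by (simp add: admissible_p_def c_def)
    have "(\<lambda>x. p (- x)) integrable_on {- (- a)..- 0}"
      using Henstock_Kurzweil_Integration.integrable_reflect_real[where f=p and a=0 and b="-a"] int0[of "-a"] False
      by (simp del: Henstock_Kurzweil_Integration.integrable_reflect_real integrable_reflect_real)
    then have "(\<lambda>x. 2 * c - p (- x)) integrable_on {a..0}" by (intro integrable_diff integrable_const_ivl) simp
    then have "p integrable_on {a..0}" using integrable_cong[of "{a..0}" p "\<lambda>x. 2 * c - p (- x)"] refl by auto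
    moreover have "p integrable_on {0..max b 0}" using int0 by simp
    ultimately have "p integrable_on {a..max b 0}" using Henstock_Kurzweil_Integration.integrable_combine[of a 0 "max b 0"] False by simp
    then show ?thesis by (rule integrable_subinterval_real) (use assms(2) in auto)
  qed
qed

lemma qf_integrable:
  assumes "admissible_p p" "a \<le> b" "0 \<le> a \<or> pzero p \<noteq> -\<infinity>"
  shows "qf p integrable_on {a..b}"
  unfolding qf_def[abs_def] by (intro integrable_diff p_integrable[OF assms] integrable_const_ivl)

lemma Gam_eq:
  assumes "pzero p = -\<infinity> \<longrightarrow> u \<ge> 0"
  shows "Gam p u = ereal (oi (qf p) 1 u)"
  using assms by (auto simp: Gam_def oi_def qf_def[abs_def])

lemma Gam_support:
  assumes ad: "admissible_p p" and m: "m \<in> Sp p" and y: "pzero p = -\<infinity> \<longrightarrow> y \<ge> 0"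
  shows "oi (qf p) 1 m + qf p m * (y - m) \<le> oi (qf p) 1 y"
proof -
  let ?q = "qf p"
  have m0: "pzero p = -\<infinity> \<longrightarrow> m > 0" using m by (simp add: Sp_def split: if_splits)
  have int: "?q integrable_on {min 1 (min m y)..max 1 (max m y)}"
    using qf_integrable[OF ad] m0 y by (cases "pzero p = -\<infinity>") auto
  have add: "oi ?q 1 m + oi ?q m y = oi ?q 1 y" by (rule oi_add[OF int])
  have intsub: "?q integrable_on {x..z}" if "min m y \<le> x" "x \<le> z" "z \<le> max m y" for x z
    using integrable_subinterval_real[OF int, of x z] that by (simp add: min_def max_def split: if_splits)
  have "?q m * (y - m) \<le> oi ?q m y"
  proof (cases "m \<le> y")
    case True
    have inS: "x \<in> Sp p" if "x \<in> {m..y}" for x using that m m0 by (auto simp: Sp_def)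
    have "integral {m..y} (\<lambda>x. ?q m) \<le> integral {m..y} ?q"
      by (rule integral_le) (use intsub[of m y] True p_mono[OF ad m inS] in \<open>auto simp: qf_def\<close>)
    then show ?thesis using True by (simp add: oi_def mult.commute)
  next
    case False
    define q' where "q' x = (if x = y then ?q m else ?q x)" for x
    have e1: "integral {y..m} ?q = integral {y..m} q'"
      by (rule integral_spike[of "{y}"]) (auto simp: q'_def)
    have i1: "q' integrable_on {y..m}"
      by (rule integrable_spike[OF intsub[of y m] negligible_sing[of y]]) (use False in \<open>auto simp: q'_def\<close>)
    have inS: "x \<in> Sp p" if "x \<in> {y..m}" "x \<noteq> y" for x using that m y by (auto simp: Sp_def)
    have "integral {y..m} q' \<le> integral {y..m} (\<lambda>x. ?q m)"
      by (rule integral_le[OF i1]) (use p_mono[OF ad _ m] inS in \<open>auto simp: q'_def qf_def\<close>)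
    then show ?thesis using False e1 by (simp add: oi_def algebra_simps)
  qed
  then show ?thesis using add by linarith
qed


lemma ennreal_integral_le_nn:
  fixes f :: "'b \<Rightarrow> real"
  assumes "integrable M f"
  shows "ennreal (integral\<^sup>L M f) \<le> (\<integral>\<^sup>+ x. ennreal (f x) \<partial>M)"
proof -
  have "integral\<^sup>L M f \<le> integral\<^sup>L M (\<lambda>x. max (f x) 0)"
    by (rule integral_mono) (use assms in auto)
  then have "ennreal (integral\<^sup>L M f) \<le> ennreal (integral\<^sup>L M (\<lambda>x. max (f x) 0))"
    by (rule ennreal_leI)
  also have "\<dots> = (\<integral>\<^sup>+ x. ennreal (max (f x) 0) \<partial>M)"
    by (rule nn_integral_eq_integral[symmetric]) (use assms in auto)
  also have "\<dots> = (\<integral>\<^sup>+ x. ennreal (f x) \<partial>M)"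
    by (intro nn_integral_cong) (simp add: max_def ennreal_eq_0_iff)
  finally show ?thesis .
qed

lemma piece_jensen:
  fixes f :: "'a::euclidean_space \<Rightarrow> real" and P :: "'a set"
  assumes ad: "admissible_p p" and P: "P \<in> sets lebesgue" "0 < measure lebesgue P" "emeasure lebesgue P < \<infinity>"
    and fm: "f \<in> borel_measurable lebesgue"
    and fi: "integrable lebesgue (\<lambda>x. indicator P x * f x)"
    and fnn: "AE x in lebesgue. x \<in> P \<longrightarrow> f x \<ge> 0"
    and m: "m = (\<integral>x. indicator P x * f x \<partial>lebesgue) / measure lebesgue P"
  shows "\<exists>c k. (AE x in lebesgue. x \<in> P \<longrightarrow> ennreal (c + k * f x) \<le> e2ennreal (Gam p (f x))) \<and>
           e2ennreal (Gam p m) * emeasure lebesgue P \<le> (\<integral>\<^sup>+ x. indicator P x * ennreal (c + k * f x) \<partial>lebesgue)"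
proof -
  let ?mu = "measure lebesgue P"
  have Pfin: "P \<in> fmeasurable lebesgue" using P by (auto simp: fmeasurable_def)
  have emP: "emeasure lebesgue P = ennreal ?mu" using Pfin by (rule emeasure_eq_measure2)
  have intI: "(\<integral>x. indicator P x * f x \<partial>lebesgue) = m * ?mu" using m P(2) by simp
  have m0: "m \<ge> 0"
  proof -
    have "0 \<le> (\<integral>x. indicator P x * f x \<partial>lebesgue)"
      by (rule integral_nonneg_AE) (use fnn in \<open>auto simp: indicator_def\<close>)
    then show ?thesis using m P(2) by simp
  qed
  show ?thesis
  proof (cases "m \<in> Sp p")
    case True
    define k where "k = qf p m"
    define c where "c = oi (qf p) 1 m - k * m"
    have Gm: "Gam p m = ereal (oi (qf p) 1 m)"
      by (rule Gam_eq) (use True in \<open>auto simp: Sp_def\<close>)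
    have ae: "AE x in lebesgue. x \<in> P \<longrightarrow> ennreal (c + k * f x) \<le> e2ennreal (Gam p (f x))"
      using fnn
    proof eventually_elim
      case (elim x)
      show ?case
      proof
        assume "x \<in> P"
        then have fx: "f x \<ge> 0" using elim by simp
        have "Gam p (f x) = ereal (oi (qf p) 1 (f x))" by (rule Gam_eq) (use fx in simp)
        moreover have "c + k * f x \<le> oi (qf p) 1 (f x)"
          using Gam_support[OF ad True, of "f x"] fx by (simp add: c_def k_def algebra_simps)
        ultimately show "ennreal (c + k * f x) \<le> e2ennreal (Gam p (f x))"
          by (simp add: ennreal_leI)
      qed
    qed
    have int2: "integrable lebesgue (\<lambda>x. indicator P x * (c + k * f x))"
    proof -
      have iP: "integrable lebesgue (indicat_real P)" using P by (intro integrable_real_indicator) auto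
      have "integrable lebesgue (\<lambda>x. c * indicator P x + k * (indicator P x * f x))"
        by (rule Bochner_Integration.integrable_add) (use iP fi in auto)
      then show ?thesis by (simp add: algebra_simps)
    qed
    have "(\<integral>x. indicator P x * (c + k * f x) \<partial>lebesgue) = c * ?mu + k * (m * ?mu)"
    proof -
      have "(\<integral>x. indicator P x * (c + k * f x) \<partial>lebesgue)
          = (\<integral>x. c * indicator P x + k * (indicator P x * f x) \<partial>lebesgue)"
        by (simp add: algebra_simps)
      also have "\<dots> = c * ?mu + k * (m * ?mu)"
        using fi P intI by (subst Bochner_Integration.integral_add) (auto intro!: integrable_real_indicator)
      finally show ?thesis .
    qed
    also have "\<dots> = oi (qf p) 1 m * ?mu" by (simp add: c_def algebra_simps)
    finally have eqI: "(\<integral>x. indicator P x * (c + k * f x) \<partial>lebesgue) = oi (qf p) 1 m * ?mu" .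
    have "e2ennreal (Gam p m) * emeasure lebesgue P = ennreal (oi (qf p) 1 m * ?mu)"
      using Gm emP by (simp add: ennreal_mult'')
    also have "\<dots> \<le> (\<integral>\<^sup>+ x. ennreal (indicator P x * (c + k * f x)) \<partial>lebesgue)"
      using ennreal_integral_le_nn[OF int2] eqI by simp
    also have "\<dots> = (\<integral>\<^sup>+ x. indicator P x * ennreal (c + k * f x) \<partial>lebesgue)"
      by (intro nn_integral_cong) (auto simp: indicator_def)
    finally show ?thesis using ae by blast
  next
    case False
    then have pz: "pzero p = -\<infinity>" and "m \<le> 0" by (auto simp: Sp_def split: if_splits)
    then have m00: "m = 0" using m0 by simp
    have "(\<integral>x. indicator P x * f x \<partial>lebesgue) = 0" using intI m00 by simp
    moreover have "AE x in lebesgue. 0 \<le> indicator P x * f x"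
      using fnn by eventually_elim (auto simp: indicator_def)
    ultimately have "AE x in lebesgue. indicator P x * f x = 0"
      using integral_nonneg_eq_0_iff_AE[OF fi] by blast
    then have fz: "AE x in lebesgue. x \<in> P \<longrightarrow> f x = 0"
      by eventually_elim (auto simp: indicator_def)
    define c where "c = oi (qf p) 1 0"
    have G0: "Gam p 0 = ereal c" unfolding c_def by (rule Gam_eq) simp
    have ae: "AE x in lebesgue. x \<in> P \<longrightarrow> ennreal (c + 0 * f x) \<le> e2ennreal (Gam p (f x))"
      using fz by eventually_elim (auto simp: G0)
    have "e2ennreal (Gam p m) * emeasure lebesgue P = (\<integral>\<^sup>+ x. indicator P x * ennreal (c + 0 * f x) \<partial>lebesgue)"
      using m00 G0 P(1) by (simp add: nn_integral_cmult_indicator mult.commute)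
    then show ?thesis using ae by (intro exI[of _ c] exI[of _ 0]) simp
  qed
qed


lemma sum_ind_single:
  fixes f :: "'i \<Rightarrow> 'b::semiring_1"
  assumes "finite I" "i \<in> I" "x \<in> Pc i" "\<And>j. j \<in> I \<Longrightarrow> j \<noteq> i \<Longrightarrow> Pc i \<inter> Pc j = {}"
  shows "(\<Sum>j\<in>I. f j * indicator (Pc j) x) = f i"
proof -
  have "(\<Sum>j\<in>I. f j * indicator (Pc j) x) = (\<Sum>j\<in>I. if j = i then f i else 0)"
    using assms by (intro sum.cong) (auto simp: indicator_def)
  also have "\<dots> = f i" using assms by simp
  finally show ?thesis .
qed

lemma sum_ind_none:
  fixes f :: "'i \<Rightarrow> 'b::semiring_1"
  assumes "\<And>j. j \<in> I \<Longrightarrow> x \<notin> Pc j"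
  shows "(\<Sum>j\<in>I. f j * indicator (Pc j) x) = 0"
  using assms by (intro sum.neutral) auto

locale pieces =
  fixes \<Omega> :: "'a::euclidean_space set" and I :: "'i set" and Pc :: "'i \<Rightarrow> 'a set" and u0 :: "'a \<Rightarrow> real"
  assumes finI: "finite I"
    and Pm: "\<And>i. i \<in> I \<Longrightarrow> Pc i \<in> sets lebesgue"
    and Psub: "\<And>i. i \<in> I \<Longrightarrow> Pc i \<subseteq> \<Omega>"
    and Ppos: "\<And>i. i \<in> I \<Longrightarrow> 0 < measure lebesgue (Pc i)"
    and Pfin: "\<And>i. i \<in> I \<Longrightarrow> emeasure lebesgue (Pc i) < \<infinity>"
    and disj: "\<And>i j. i \<in> I \<Longrightarrow> j \<in> I \<Longrightarrow> i \<noteq> j \<Longrightarrow> Pc i \<inter> Pc j = {}"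
    and cover: "\<Omega> - (\<Union>i\<in>I. Pc i) \<in> null_sets lebesgue"
    and \<Omega>m: "\<Omega> \<in> sets lebesgue"
    and u0i: "set_integrable lebesgue \<Omega> u0"
    and nn: "AE x in lebesgue. x \<in> \<Omega> \<longrightarrow> u0 x \<ge> 0"
begin

definition "u' x = indicator \<Omega> x * u0 x"

lemma u'i: "integrable lebesgue u'"
  using u0i by (simp add: set_integrable_def u'_def[abs_def])

lemma u'm: "u' \<in> borel_measurable lebesgue"
  using u'i by (rule borel_measurable_integrable)

lemma ind_u'_int: "i \<in> I \<Longrightarrow> integrable lebesgue (\<lambda>x. indicator (Pc i) x * u' x)"
  using integrable_mult_indicator[OF Pm u'i] by simp

lemma ind_u'_eq: "i \<in> I \<Longrightarrow> (\<integral>x. indicator (Pc i) x * u' x \<partial>lebesgue) = (LINT x:Pc i|lebesgue. u0 x)"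
  unfolding set_lebesgue_integral_def u'_def using Psub
  by (intro Bochner_Integration.integral_cong) (auto simp: indicator_def)

lemma single: "i \<in> I \<Longrightarrow> x \<in> Pc i \<Longrightarrow> (\<Sum>j\<in>I. (f j :: 'b::semiring_1) * indicator (Pc j) x) = f i"
  by (rule sum_ind_single[OF finI]) (use disj in auto)

lemma ae_cover: "AE x in lebesgue. x \<in> \<Omega> \<longrightarrow> (\<exists>i\<in>I. x \<in> Pc i)"
  using AE_not_in[OF cover] by eventually_elim auto

lemma gamma_part:
  assumes ad: "admissible_p p"
    and avg: "\<And>i. i \<in> I \<Longrightarrow> a i = (LINT x:Pc i|lebesgue. u0 x) / measure lebesgue (Pc i)"
  shows "(\<integral>\<^sup>+x\<in>\<Omega>. e2ennreal (Gam p (\<Sum>j\<in>I. a j * indicator (Pc j) x)) \<partial>lebesgue)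
       \<le> (\<integral>\<^sup>+x\<in>\<Omega>. e2ennreal (Gam p (u0 x)) \<partial>lebesgue)"
proof -
  have ex: "\<forall>i\<in>I. \<exists>c k. (AE x in lebesgue. x \<in> Pc i \<longrightarrow> ennreal (c + k * u' x) \<le> e2ennreal (Gam p (u' x))) \<and>
           e2ennreal (Gam p (a i)) * emeasure lebesgue (Pc i) \<le> (\<integral>\<^sup>+ x. indicator (Pc i) x * ennreal (c + k * u' x) \<partial>lebesgue)"
  proof
    fix i assume i: "i \<in> I"
    show "\<exists>c k. (AE x in lebesgue. x \<in> Pc i \<longrightarrow> ennreal (c + k * u' x) \<le> e2ennreal (Gam p (u' x))) \<and>
           e2ennreal (Gam p (a i)) * emeasure lebesgue (Pc i) \<le> (\<integral>\<^sup>+ x. indicator (Pc i) x * ennreal (c + k * u' x) \<partial>lebesgue)"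
    proof (rule piece_jensen[OF ad Pm[OF i] Ppos[OF i] Pfin[OF i] u'm ind_u'_int[OF i]])
      show "AE x in lebesgue. x \<in> Pc i \<longrightarrow> 0 \<le> u' x"
        using nn by eventually_elim (use Psub[OF i] in \<open>auto simp: u'_def\<close>)
      show "a i = (\<integral>x. indicator (Pc i) x * u' x \<partial>lebesgue) / measure lebesgue (Pc i)"
        using avg[OF i] ind_u'_eq[OF i] by simp
    qed
  qed
  then obtain c k where ck: "\<And>i. i \<in> I \<Longrightarrow> (AE x in lebesgue. x \<in> Pc i \<longrightarrow> ennreal (c i + k i * u' x) \<le> e2ennreal (Gam p (u' x)))"
    "\<And>i. i \<in> I \<Longrightarrow> e2ennreal (Gam p (a i)) * emeasure lebesgue (Pc i) \<le> (\<integral>\<^sup>+ x. indicator (Pc i) x * ennreal (c i + k i * u' x) \<partial>lebesgue)"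
  proof -
    obtain c where c: "\<forall>i\<in>I. \<exists>k. (AE x in lebesgue. x \<in> Pc i \<longrightarrow> ennreal (c i + k * u' x) \<le> e2ennreal (Gam p (u' x))) \<and>
           e2ennreal (Gam p (a i)) * emeasure lebesgue (Pc i) \<le> (\<integral>\<^sup>+ x. indicator (Pc i) x * ennreal (c i + k * u' x) \<partial>lebesgue)"
      using bchoice[OF ex] by blast
    obtain k where k: "\<forall>i\<in>I. (AE x in lebesgue. x \<in> Pc i \<longrightarrow> ennreal (c i + k i * u' x) \<le> e2ennreal (Gam p (u' x))) \<and>
           e2ennreal (Gam p (a i)) * emeasure lebesgue (Pc i) \<le> (\<integral>\<^sup>+ x. indicator (Pc i) x * ennreal (c i + k i * u' x) \<partial>lebesgue)"
      using bchoice[OF c] by blast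
    show ?thesis by (rule that[of c k]) (use k in blast)+
  qed
  have "(\<integral>\<^sup>+x\<in>\<Omega>. e2ennreal (Gam p (\<Sum>j\<in>I. a j * indicator (Pc j) x)) \<partial>lebesgue)
      = (\<integral>\<^sup>+x. (\<Sum>j\<in>I. e2ennreal (Gam p (a j)) * indicator (Pc j) x) \<partial>lebesgue)"
  proof (rule nn_integral_cong_AE)
    show "AE x in lebesgue. e2ennreal (Gam p (\<Sum>j\<in>I. a j * indicator (Pc j) x)) * indicator \<Omega> x =
             (\<Sum>j\<in>I. e2ennreal (Gam p (a j)) * indicator (Pc j) x)"
      using ae_cover
    proof eventually_elim
      case (elim x)
      show ?case
      proof (cases "\<exists>i\<in>I. x \<in> Pc i")
        case True
        then obtain i where i: "i \<in> I" "x \<in> Pc i" by blast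
        then have "x \<in> \<Omega>" using Psub by auto
        then show ?thesis using single[OF i, of a] single[OF i, of "\<lambda>j. e2ennreal (Gam p (a j))"] by simp
      next
        case False
        then have "x \<notin> \<Omega>" using elim by blast
        then show ?thesis using False by (simp add: sum_ind_none)
      qed
    qed
  qed
  also have "\<dots> = (\<Sum>j\<in>I. e2ennreal (Gam p (a j)) * emeasure lebesgue (Pc j))"
    by (subst nn_integral_sum) (auto simp: nn_integral_cmult_indicator Pm intro!: borel_measurable_times_ennreal borel_measurable_indicator)
  also have "\<dots> \<le> (\<Sum>j\<in>I. \<integral>\<^sup>+ x. indicator (Pc j) x * ennreal (c j + k j * u' x) \<partial>lebesgue)"
    by (rule sum_mono) (rule ck(2))
  also have "\<dots> = (\<integral>\<^sup>+ x. (\<Sum>j\<in>I. indicator (Pc j) x * ennreal (c j + k j * u' x)) \<partial>lebesgue)"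
    by (subst nn_integral_sum) (use Pm u'm in auto)
  also have "\<dots> \<le> (\<integral>\<^sup>+x\<in>\<Omega>. e2ennreal (Gam p (u0 x)) \<partial>lebesgue)"
  proof (rule nn_integral_mono_AE)
    have "AE x in lebesgue. \<forall>i\<in>I. x \<in> Pc i \<longrightarrow> ennreal (c i + k i * u' x) \<le> e2ennreal (Gam p (u' x))"
      by (rule AE_finite_allI[OF finI]) (rule ck(1))
    then show "AE x in lebesgue. (\<Sum>j\<in>I. indicator (Pc j) x * ennreal (c j + k j * u' x)) \<le> e2ennreal (Gam p (u0 x)) * indicator \<Omega> x"
    proof eventually_elim
      case (elim x)
      show ?case
      proof (cases "\<exists>i\<in>I. x \<in> Pc i")
        case True
        then obtain i where i: "i \<in> I" "x \<in> Pc i" by blast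
        then have "x \<in> \<Omega>" using Psub by auto
        have "(\<Sum>j\<in>I. indicator (Pc j) x * ennreal (c j + k j * u' x)) = ennreal (c i + k i * u' x)"
          using single[OF i, of "\<lambda>j. ennreal (c j + k j * u' x)"] by (simp add: mult.commute)
        also have "\<dots> \<le> e2ennreal (Gam p (u' x))" using elim i by blast
        finally show ?thesis using \<open>x \<in> \<Omega>\<close> by (simp add: u'_def)
      next
        case False
        then show ?thesis by (simp add: sum_ind_none)
      qed
    qed
  qed
  finally show ?thesis .
qed

lemma V_part:
  assumes avg: "\<And>i. i \<in> I \<Longrightarrow> a i = (LINT x:Pc i|lebesgue. u0 x) / measure lebesgue (Pc i)"
    and uV: "set_integrable lebesgue \<Omega> (\<lambda>x. u0 x * V x)"
    and B: "AE x in lebesgue. x \<in> \<Omega> \<longrightarrow> \<bar>(\<Sum>j\<in>I. w j * indicator (Pc j) x) - V x\<bar> \<le> B"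
  shows "(LINT x:\<Omega>|lebesgue. (\<Sum>j\<in>I. a j * indicator (Pc j) x) * (\<Sum>j\<in>I. w j * indicator (Pc j) x))
       \<le> (LINT x:\<Omega>|lebesgue. u0 x * V x) + B * (LINT x:\<Omega>|lebesgue. \<bar>u0 x\<bar>)"
proof -
  define W where "W x = (\<Sum>j\<in>I. w j * indicator (Pc j) x)" for x
  have mu: "measure lebesgue (Pc j) = (\<integral>x. indicator (Pc j) x \<partial>lebesgue)" if "j \<in> I" for j
    using Pm[OF that] by simp
  have iPc: "integrable lebesgue (indicat_real (Pc j))" if "j \<in> I" for j
    using Pm[OF that] Pfin[OF that] by auto
  have "(LINT x:\<Omega>|lebesgue. (\<Sum>j\<in>I. a j * indicator (Pc j) x) * W x)
      = (\<integral>x. (\<Sum>j\<in>I. (a j * w j) * indicator (Pc j) x) \<partial>lebesgue)"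
    unfolding set_lebesgue_integral_def
  proof (intro Bochner_Integration.integral_cong refl)
    fix x
    show "indicator \<Omega> x *\<^sub>R ((\<Sum>j\<in>I. a j * indicator (Pc j) x) * W x) = (\<Sum>j\<in>I. (a j * w j) * indicator (Pc j) x)"
    proof (cases "\<exists>i\<in>I. x \<in> Pc i")
      case True
      then obtain i where i: "i \<in> I" "x \<in> Pc i" by blast
      then have "x \<in> \<Omega>" using Psub by auto
      then show ?thesis using single[OF i, of a] single[OF i, of w] single[OF i, of "\<lambda>j. a j * w j"]
        by (simp add: W_def)
    next
      case False
      then show ?thesis by (simp add: sum_ind_none W_def)
    qed
  qed
  also have "\<dots> = (\<Sum>j\<in>I. (a j * w j) * measure lebesgue (Pc j))"
    using iPc Pm by (subst Bochner_Integration.integral_sum) auto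
  also have "\<dots> = (\<Sum>j\<in>I. w j * (\<integral>x. indicator (Pc j) x * u' x \<partial>lebesgue))"
  proof (rule sum.cong[OF refl])
    fix j assume j: "j \<in> I"
    show "a j * w j * measure lebesgue (Pc j) = w j * (\<integral>x. indicator (Pc j) x * u' x \<partial>lebesgue)"
      using avg[OF j] ind_u'_eq[OF j] Ppos[OF j] by simp
  qed
  also have "\<dots> = (\<integral>x. (\<Sum>j\<in>I. w j * (indicator (Pc j) x * u' x)) \<partial>lebesgue)"
    using ind_u'_int by (subst Bochner_Integration.integral_sum) auto
  also have "\<dots> = (\<integral>x. indicator \<Omega> x * u0 x * W x \<partial>lebesgue)"
  proof (intro Bochner_Integration.integral_cong refl)
    fix x
    show "(\<Sum>j\<in>I. w j * (indicator (Pc j) x * u' x)) = indicator \<Omega> x * u0 x * W x"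
      by (simp add: W_def u'_def sum_distrib_left sum_distrib_right mult_ac)
  qed
  finally have eq1: "(LINT x:\<Omega>|lebesgue. (\<Sum>j\<in>I. a j * indicator (Pc j) x) * W x)
      = (\<integral>x. indicator \<Omega> x * u0 x * W x \<partial>lebesgue)" .
  have int1: "integrable lebesgue (\<lambda>x. indicator \<Omega> x * u0 x * W x)"
  proof -
    have "integrable lebesgue (\<lambda>x. (\<Sum>j\<in>I. w j * (indicator (Pc j) x * u' x)))"
      using ind_u'_int by auto
    moreover have "(\<lambda>x. (\<Sum>j\<in>I. w j * (indicator (Pc j) x * u' x))) = (\<lambda>x. indicator \<Omega> x * u0 x * W x)"
      by (simp add: W_def u'_def sum_distrib_left sum_distrib_right mult_ac fun_eq_iff)
    ultimately show ?thesis by simp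
  qed
  have int2: "integrable lebesgue (\<lambda>x. indicator \<Omega> x * (u0 x * V x))"
    using uV by (simp add: set_integrable_def)
  have int3: "integrable lebesgue (\<lambda>x. indicator \<Omega> x * \<bar>u0 x\<bar>)"
  proof -
    have "integrable lebesgue (\<lambda>x. \<bar>u' x\<bar>)" using u'i by auto
    then show ?thesis by (simp add: u'_def abs_mult)
  qed
  have "(\<integral>x. indicator \<Omega> x * u0 x * W x \<partial>lebesgue) - (\<integral>x. indicator \<Omega> x * (u0 x * V x) \<partial>lebesgue)
      = (\<integral>x. indicator \<Omega> x * u0 x * W x - indicator \<Omega> x * (u0 x * V x) \<partial>lebesgue)"
    using int1 int2 by (simp add: Bochner_Integration.integral_diff)
  also have "\<dots> \<le> (\<integral>x. B * (indicator \<Omega> x * \<bar>u0 x\<bar>) \<partial>lebesgue)"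
  proof (rule integral_mono_AE)
    show "integrable lebesgue (\<lambda>x. indicator \<Omega> x * u0 x * W x - indicator \<Omega> x * (u0 x * V x))"
      using int1 int2 by auto
    show "integrable lebesgue (\<lambda>x. B * (indicator \<Omega> x * \<bar>u0 x\<bar>))" using int3 by auto
    show "AE x in lebesgue. indicator \<Omega> x * u0 x * W x - indicator \<Omega> x * (u0 x * V x) \<le> B * (indicator \<Omega> x * \<bar>u0 x\<bar>)"
      using B
    proof eventually_elim
      case (elim x)
      show ?case
      proof (cases "x \<in> \<Omega>")
        case True
        then have b: "\<bar>W x - V x\<bar> \<le> B" using elim by (simp add: W_def)
        have "u0 x * W x - u0 x * V x = u0 x * (W x - V x)" by (simp add: algebra_simps)
        also have "\<dots> \<le> \<bar>u0 x\<bar> * \<bar>W x - V x\<bar>" by (metis abs_ge_self abs_mult)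
        also have "\<dots> \<le> \<bar>u0 x\<bar> * B" using b by (simp add: mult_left_mono)
        finally show ?thesis using True by (simp add: mult.commute)
      next
        case False then show ?thesis by simp
      qed
    qed
  qed
  also have "\<dots> = B * (LINT x:\<Omega>|lebesgue. \<bar>u0 x\<bar>)"
    by (simp add: set_lebesgue_integral_def)
  finally show ?thesis using eq1
    by (simp add: W_def set_lebesgue_integral_def)
qed

end


lemma ae_deriv_bound_1d_aux:
  fixes g :: "real \<Rightarrow> real"
  assumes lip: "B-lipschitz_on {0..1} g" and negN: "negligible N"
    and der: "\<And>t. t \<in> {0..1} - N \<Longrightarrow> \<exists>d. (g has_real_derivative d) (at t) \<and> d \<le> M"
    and eps: "\<epsilon> > 0"
  shows "g 1 - g 0 \<le> M + \<epsilon>"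
proof (rule ccontr)
  assume neg: "\<not> ?thesis"
  define h where "h t = g t - (M + \<epsilon>) * t" for t
  have h01: "h 0 < h 1" using neg by (simp add: h_def)
  have B0: "B \<ge> 0" using lip lipschitz_on_nonneg by blast
  have contg: "continuous_on {0..1} g" using lip lipschitz_on_continuous_on by blast
  have conth: "continuous_on {0..1} h" unfolding h_def by (intro continuous_intros contg)
  define N' where "N' = (N \<union> {0}) \<inter> {0..1}"
  have negN': "negligible N'" unfolding N'_def
    by (meson negN negligible_Int negligible_Un negligible_insert negligible_empty)
  have "negligible (h ` N')"
  proof (rule negligible_locally_Lipschitz_image[OF _ negN'])
    fix x assume x: "x \<in> N'"
    show "\<exists>T C. open T \<and> x \<in> T \<and> (\<forall>y\<in>N' \<inter> T. norm (h y - h x) \<le> C * norm (y - x))"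
    proof (intro exI conjI)
      show "open (UNIV::real set)" by simp
      show "x \<in> UNIV" by simp
      show "\<forall>y\<in>N' \<inter> UNIV. norm (h y - h x) \<le> (B + \<bar>M + \<epsilon>\<bar>) * norm (y - x)"
      proof
        fix y assume y: "y \<in> N' \<inter> UNIV"
        have "x \<in> {0..1}" "y \<in> {0..1}" using x y N'_def by auto
        then have "dist (g y) (g x) \<le> B * dist y x" using lip lipschitz_onD by blast
        then have "\<bar>g y - g x\<bar> \<le> B * \<bar>y - x\<bar>" by (simp add: dist_real_def)
        moreover have "\<bar>(M + \<epsilon>) * y - (M + \<epsilon>) * x\<bar> = \<bar>M + \<epsilon>\<bar> * \<bar>y - x\<bar>"
          by (metis abs_mult right_diff_distrib)
        ultimately show "norm (h y - h x) \<le> (B + \<bar>M + \<epsilon>\<bar>) * norm (y - x)"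
          unfolding h_def by (simp add: distrib_right)
      qed
    qed
  qed simp
  moreover have "\<not> negligible {h 0<..<h 1}"
    using h01 negligible_interval(2)[of "h 0" "h 1"] by (simp add: box_real(1))
  ultimately have "\<not> {h 0<..<h 1} \<subseteq> h ` N'" using negligible_subset by blast
  then obtain c where c: "c \<in> {h 0<..<h 1}" "c \<notin> h ` N'" by blast
  define S where "S = {t \<in> {0..1}. h t \<le> c}"
  have "closed S" unfolding S_def
    using continuous_closed_preimage[OF conth closed_atLeastAtMost, of "{..c}"]
    by (simp add: vimage_def Int_def conj_commute)
  have "0 \<in> S" using c by (simp add: S_def)
  have bdd: "bdd_above S" unfolding S_def by (auto intro: bdd_aboveI[of _ 1])
  define \<tau> where "\<tau> = Sup S"
  have "\<tau> \<in> S" unfolding \<tau>_def using \<open>closed S\<close> \<open>0 \<in> S\<close> bdd closed_contains_Sup by blast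
  then have t01: "0 \<le> \<tau>" "\<tau> \<le> 1" "h \<tau> \<le> c" by (auto simp: S_def)
  have "\<tau> \<noteq> 1" using \<open>h \<tau> \<le> c\<close> c by auto
  have above: "t \<in> {0..1} \<Longrightarrow> t > \<tau> \<Longrightarrow> h t > c" for t
    using cSup_upper[OF _ bdd] unfolding \<tau>_def S_def by fastforce
  obtain t where t: "\<tau> \<le> t" "t \<le> 1" "h t = c"
    using IVT'[of h \<tau> c 1] t01 c conth continuous_on_subset[of "{0..1}" h "{\<tau>..1}"] by auto
  have "h \<tau> = c" using above[of t] t t01 by (cases "t = \<tau>") auto
  then have "\<tau> \<notin> N'" using c by auto
  then have "\<tau> \<in> {0..1} - N" using t01 by (auto simp: N'_def)
  then obtain d where d: "(g has_real_derivative d) (at \<tau>)" "d \<le> M" using der by blast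
  have "(h has_real_derivative (d - (M + \<epsilon>))) (at \<tau>)"
    unfolding h_def using d(1) by (auto intro!: derivative_eq_intros)
  moreover have "d - (M + \<epsilon>) < 0" using d eps by simp
  ultimately obtain \<delta> where \<delta>: "\<delta> > 0" "\<And>e. e > 0 \<Longrightarrow> e < \<delta> \<Longrightarrow> h \<tau> > h (\<tau> + e)"
    using DERIV_neg_dec_right by blast
  define e where "e = min (\<delta>/2) ((1 - \<tau>)/2)"
  have "e > 0" "e < \<delta>" using \<delta> \<open>\<tau> \<noteq> 1\<close> t01 by (auto simp: e_def)
  then have "h \<tau> > h (\<tau> + e)" using \<delta> by blast
  moreover have "\<tau> + e \<le> 1" using t01 unfolding e_def by (simp add: min_def field_simps)
  then have "h (\<tau> + e) > c" using above[of "\<tau> + e"] \<open>e > 0\<close> t01 by auto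
  ultimately show False using \<open>h \<tau> = c\<close> by simp
qed

lemma ae_deriv_bound_1d:
  fixes g :: "real \<Rightarrow> real"
  assumes lip: "B-lipschitz_on {0..1} g" and negN: "negligible N"
    and der: "\<And>t. t \<in> {0..1} - N \<Longrightarrow> \<exists>d. (g has_real_derivative d) (at t) \<and> \<bar>d\<bar> \<le> M"
  shows "\<bar>g 1 - g 0\<bar> \<le> M"
proof -
  have a: "g 1 - g 0 \<le> M + e" if "e > 0" for e
    by (rule ae_deriv_bound_1d_aux[OF lip negN _ that]) (use der in fastforce)
  have lip': "B-lipschitz_on {0..1} (\<lambda>t. - g t)"
    using lip by (simp add: lipschitz_on_def dist_minus)
  have b: "(- g 1) - (- g 0) \<le> M + e" if "e > 0" for e
  proof (rule ae_deriv_bound_1d_aux[OF lip' negN _ that])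
    fix t assume "t \<in> {0..1} - N"
    then obtain d where "(g has_real_derivative d) (at t)" "\<bar>d\<bar> \<le> M" using der by blast
    then show "\<exists>d. ((\<lambda>t. - g t) has_real_derivative d) (at t) \<and> d \<le> M"
      by (intro exI[of _ "-d"]) (auto intro!: derivative_eq_intros)
  qed
  have "g 1 - g 0 \<le> M" using a by (meson field_le_epsilon)
  moreover have "g 0 - g 1 \<le> M" using b by (simp add: field_le_epsilon)
  ultimately show ?thesis by linarith
qed

lemma ae_line_avoid:
  fixes N :: "'a::euclidean_space set" and a v :: 'a
  assumes N: "N \<in> null_sets lborel"
  shows "AE z in lborel. AE t in lborel. t \<in> {0..1} \<longrightarrow> a + z + t *\<^sub>R v \<notin> N"
proof -
  interpret P: pair_sigma_finite "lborel :: 'a measure" "lborel :: real measure"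
    by unfold_locales
  have PSF: "pair_sigma_finite (lborel :: 'a measure) (lborel :: real measure)"
    by unfold_locales
  have Nb: "N \<in> sets borel" using N by auto
  define F :: "'a \<Rightarrow> real \<Rightarrow> ennreal" where "F z t = indicator N (a + z + t *\<^sub>R v) * indicator {0..1::real} t" for z t
  have meas: "case_prod F \<in> borel_measurable (lborel \<Otimes>\<^sub>M lborel)"
    unfolding F_def using Nb by measurable
  have inner: "(\<integral>\<^sup>+ z. F z t \<partial>lborel) = 0" for t
  proof -
    have "(\<integral>\<^sup>+ z. F z t \<partial>lborel) = (\<integral>\<^sup>+ z. indicator N ((a + t *\<^sub>R v) + z) \<partial>lborel) * indicator {0..1::real} t"
      unfolding F_def by (subst nn_integral_multc) (use Nb in \<open>auto simp: add_ac\<close>)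
    also have "(\<integral>\<^sup>+ z. indicator N ((a + t *\<^sub>R v) + z) \<partial>lborel) = (\<integral>\<^sup>+ y. indicator N y \<partial>distr lborel borel ((+) (a + t *\<^sub>R v)))"
      by (subst nn_integral_distr) (use Nb in auto)
    also have "\<dots> = emeasure lborel N"
      by (simp add: lborel_distr_plus Nb)
    also have "\<dots> = 0" using N by auto
    finally show ?thesis by simp
  qed
  have "(\<integral>\<^sup>+ z. (\<integral>\<^sup>+ t. F z t \<partial>lborel) \<partial>lborel) = (\<integral>\<^sup>+ t. (\<integral>\<^sup>+ z. F z t \<partial>lborel) \<partial>lborel)"
    using pair_sigma_finite.Fubini'[OF PSF meas] by simp
  also have "\<dots> = 0" by (simp add: inner)
  finally have "(\<integral>\<^sup>+ z. (\<integral>\<^sup>+ t. F z t \<partial>lborel) \<partial>lborel) = 0" .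
  moreover have "(\<lambda>z. \<integral>\<^sup>+ t. F z t \<partial>lborel) \<in> borel_measurable lborel"
    using meas by measurable
  ultimately have "AE z in lborel. (\<integral>\<^sup>+ t. F z t \<partial>lborel) = 0"
    using nn_integral_0_iff_AE by blast
  moreover have "AE t in lborel. t \<in> {0..1} \<longrightarrow> a + z + t *\<^sub>R v \<notin> N"
    if "(\<integral>\<^sup>+ t. F z t \<partial>lborel) = 0" for z
  proof -
    have "(\<lambda>t. F z t) \<in> borel_measurable lborel" unfolding F_def using Nb by measurable
    then have "AE t in lborel. F z t = 0" using nn_integral_0_iff_AE that by blast
    then show ?thesis
      by eventually_elim (auto simp: F_def indicator_def split: if_splits)
  qed
  ultimately show ?thesis by (auto elim: AE_mp)
qed

lemma segment_lip_bound:
  fixes V :: "'a::euclidean_space \<Rightarrow> real"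
  assumes "open \<Omega>" and lip: "L-lipschitz_on \<Omega> V" and N: "N \<in> null_sets lborel"
    and der: "\<And>x. x \<in> \<Omega> - N \<Longrightarrow> \<exists>D. (V has_derivative D) (at x) \<and> onorm D \<le> G"
    and seg: "closed_segment a b \<subseteq> \<Omega>"
  shows "\<bar>V b - V a\<bar> \<le> G * norm (b - a)"
proof -
  obtain \<delta> where \<delta>: "\<delta> > 0" "(\<Union>x\<in>closed_segment a b. ball x \<delta>) \<subseteq> \<Omega>"
    using compact_subset_open_imp_ball_epsilon_subset[OF compact_segment \<open>open \<Omega>\<close> seg] by blast
  have L0: "L \<ge> 0" using lip lipschitz_on_nonneg by blast
  have a\<Omega>: "a \<in> \<Omega>" and b\<Omega>: "b \<in> \<Omega>" using seg by auto
  have main: "\<bar>V b - V a\<bar> \<le> G * norm (b - a) + 2 * L * e" if e: "e > 0" "e < \<delta>" for e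
  proof -
    have ae: "AE z in lborel. AE t in lborel. t \<in> {0..1} \<longrightarrow> a + z + t *\<^sub>R (b - a) \<notin> N"
      by (rule ae_line_avoid[OF N])
    then obtain N0 where N0: "{z \<in> space lborel. \<not> (AE t in lborel. t \<in> {0..1} \<longrightarrow> a + z + t *\<^sub>R (b - a) \<notin> N)} \<subseteq> N0"
      "emeasure lborel N0 = 0" "N0 \<in> sets lborel"
      by (rule AE_E)
    have "negligible N0" unfolding negligible_iff_null_sets
      using N0 by (auto intro!: null_sets_completionI)
    then have "\<not> ball 0 e \<subseteq> N0" using open_not_negligible[of "ball (0::'a) e"] e negligible_subset by auto
    then obtain z where z0: "z \<in> ball 0 e" "z \<notin> N0" by blast
    then have z: "norm z < e" "AE t in lborel. t \<in> {0..1} \<longrightarrow> a + z + t *\<^sub>R (b - a) \<notin> N"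
      using N0(1) by auto
    obtain N1 where N1: "{t \<in> space lborel. \<not> (t \<in> {0..1} \<longrightarrow> a + z + t *\<^sub>R (b - a) \<notin> N)} \<subseteq> N1"
      "emeasure lborel N1 = 0" "N1 \<in> sets lborel"
      using AE_E[OF z(2)] by blast
    have negN1: "negligible N1" unfolding negligible_iff_null_sets
      using N1 by (auto intro!: null_sets_completionI)
    define \<gamma> where "\<gamma> t = a + z + t *\<^sub>R (b - a)" for t
    have \<gamma>\<Omega>: "\<gamma> t \<in> \<Omega>" if "t \<in> {0..1}" for t
    proof -
      have "a + t *\<^sub>R (b - a) \<in> closed_segment a b"
        using that by (auto simp: closed_segment_def algebra_simps intro!: exI[of _ t])
      moreover have "\<gamma> t \<in> ball (a + t *\<^sub>R (b - a)) \<delta>"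
        using z e by (simp add: \<gamma>_def dist_norm)
      ultimately show ?thesis using \<delta>(2) by blast
    qed
    define g where "g t = V (\<gamma> t)" for t
    have glip: "(L * norm (b - a))-lipschitz_on {0..1} g"
    proof (rule lipschitz_onI)
      fix s t :: real assume st: "s \<in> {0..1}" "t \<in> {0..1}"
      have "dist (g s) (g t) \<le> L * dist (\<gamma> s) (\<gamma> t)"
        unfolding g_def using lip lipschitz_onD \<gamma>\<Omega> st by blast
      also have "dist (\<gamma> s) (\<gamma> t) = \<bar>s - t\<bar> * norm (b - a)"
        by (simp add: \<gamma>_def dist_norm scaleR_diff_left[symmetric])
      finally show "dist (g s) (g t) \<le> L * norm (b - a) * dist s t"
        by (simp add: dist_real_def mult_ac)
    next
      show "0 \<le> L * norm (b - a)" using L0 by simp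
    qed
    have "\<bar>g 1 - g 0\<bar> \<le> G * norm (b - a)"
    proof (rule ae_deriv_bound_1d[OF glip negN1])
      fix t assume t: "t \<in> {0..1} - N1"
      then have "\<gamma> t \<in> \<Omega> - N" using N1(1) \<gamma>\<Omega> by (auto simp: \<gamma>_def)
      then obtain D where D: "(V has_derivative D) (at (\<gamma> t))" "onorm D \<le> G" using der by blast
      have bl: "bounded_linear D" using D(1) has_derivative_bounded_linear by blast
      have "(\<gamma> has_derivative (\<lambda>h. h *\<^sub>R (b - a))) (at t)"
        unfolding \<gamma>_def by (auto intro!: derivative_eq_intros)
      from diff_chain_at[OF this D(1)]
      moreover have "D \<circ> (\<lambda>h. h *\<^sub>R (b - a)) = (\<lambda>h. h * D (b - a))"
        using linear_scale[OF bounded_linear.linear[OF bl]] by (auto simp: o_def)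
      moreover have "V \<circ> \<gamma> = g" by (auto simp: g_def o_def)
      ultimately have "(g has_derivative (\<lambda>h. h * D (b - a))) (at t)" by simp
      then have "(g has_real_derivative D (b - a)) (at t)"
        by (simp add: has_field_derivative_def mult.commute[of _ "D (b - a)"])
      moreover have "\<bar>D (b - a)\<bar> \<le> G * norm (b - a)"
      proof -
        have "\<bar>D (b - a)\<bar> \<le> onorm D * norm (b - a)" using onorm[OF bl, of "b - a"] by simp
        also have "\<dots> \<le> G * norm (b - a)" by (rule mult_right_mono[OF D(2) norm_ge_zero])
        finally show ?thesis .
      qed
      ultimately show "\<exists>d. (g has_real_derivative d) (at t) \<and> \<bar>d\<bar> \<le> G * norm (b - a)" by blast
    qed
    moreover have g1: "\<gamma> 1 = b + z" "\<gamma> 0 = a + z" by (simp_all add: \<gamma>_def algebra_simps)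
    ultimately have gb: "\<bar>V (b + z) - V (a + z)\<bar> \<le> G * norm (b - a)"
      by (simp add: g_def)
    have "a + z \<in> \<Omega>" "b + z \<in> \<Omega>" using \<gamma>\<Omega>[of 0] \<gamma>\<Omega>[of 1] g1 by auto
    then have "dist (V (a + z)) (V a) \<le> L * dist (a + z) a" "dist (V (b + z)) (V b) \<le> L * dist (b + z) b"
      using lipschitz_onD[OF lip] a\<Omega> b\<Omega> by blast+
    then have "\<bar>V (a + z) - V a\<bar> \<le> L * norm z" "\<bar>V (b + z) - V b\<bar> \<le> L * norm z"
      by (simp_all add: dist_real_def dist_norm)
    moreover have "L * norm z \<le> L * e" using z L0 by (simp add: mult_left_mono)
    ultimately show ?thesis using gb by linarith
  qed
  show ?thesis
  proof (rule field_le_epsilon)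
    fix \<epsilon> :: real assume "\<epsilon> > 0"
    define e where "e = min (\<delta>/2) (\<epsilon> / (2 * L + 1))"
    have "e > 0" "e < \<delta>" using \<delta> \<open>\<epsilon> > 0\<close> L0 by (auto simp: e_def)
    then have "\<bar>V b - V a\<bar> \<le> G * norm (b - a) + 2 * L * e" by (rule main)
    moreover have "2 * L * e \<le> \<epsilon>"
    proof -
      have "e \<le> \<epsilon> / (2 * L + 1)" by (simp add: e_def)
      then have "(2 * L + 1) * e \<le> \<epsilon>" using L0 by (simp add: field_simps)
      then show ?thesis using \<open>e > 0\<close> by (simp add: algebra_simps)
    qed
    ultimately show "\<bar>V b - V a\<bar> \<le> G * norm (b - a) + \<epsilon>" by linarith
  qed
qed


lemma polyhedral_cell_frontier_negligible:
  assumes "polyhedral_cell K"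
  shows "negligible (frontier K)"
proof -
  obtain P where P: "finite P" "\<forall>Q\<in>P. polytope Q" "closure K = \<Union>P" and oK: "open K"
    and KK: "K = interior (closure K)"
    using assms by (auto simp: polyhedral_cell_def polyhedral_open_def)
  have "frontier K \<subseteq> (\<Union>Q\<in>P. frontier Q)"
  proof
    fix x assume x: "x \<in> frontier K"
    then have xc: "x \<in> closure K" and xK: "x \<notin> K" using oK by (auto simp: frontier_def interior_open)
    then obtain Q where Q: "Q \<in> P" "x \<in> Q" using P(3) by auto
    have "Q \<subseteq> closure K" using P(3) Q(1) by auto
    then have "interior Q \<subseteq> K" using KK interior_mono by blast
    then have "x \<notin> interior Q" using xK by auto
    then have "x \<in> frontier Q" using Q(2) closure_subset[of Q] by (auto simp: frontier_def)
    then show "x \<in> (\<Union>Q\<in>P. frontier Q)" using Q(1) by auto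
  qed
  moreover have "negligible (\<Union>Q\<in>P. frontier Q)"
    using P(1,2) by (intro negligible_Union) (auto intro!: negligible_convex_frontier polytope_imp_convex)
  ultimately show ?thesis using negligible_subset by blast
qed

lemma simplex_bounded:
  assumes "int DIM('a) simplex (T :: 'a::euclidean_space set)"
  shows "compact T"
proof -
  obtain c where c: "\<not> affine_dependent c" "int (card c) = int DIM('a) + 1" "T = convex hull c"
    using assms by (auto simp: simplex_def)
  then have "card c > 0" by linarith
  then have "finite c" using card_gt_0_iff by blast
  then show ?thesis using c(3) by (simp add: compact_convex_hull finite_imp_compact)
qed

context
  fixes \<Omega> :: "'a::euclidean_space set" and \<M> xc Vt VK \<T> \<alpha> \<omega>K \<omega>Ks
  assumes disc: "discretization \<Omega> \<M> xc Vt VK \<T> \<alpha> \<omega>K \<omega>Ks"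
begin

lemma dfacts:
  shows "finite \<M>" "\<M> \<noteq> {}" "\<And>K. K \<in> \<M> \<Longrightarrow> polyhedral_cell K \<and> K \<subseteq> \<Omega> \<and> star_shaped_wrt K (xc K)"
    "\<And>K L. K \<in> \<M> \<Longrightarrow> L \<in> \<M> \<Longrightarrow> K \<noteq> L \<Longrightarrow> K \<inter> L = {}"
    "\<Union>(closure ` \<M>) = closure \<Omega>" "finite Vt" "Vt = \<Union>(VK ` \<M>)"
    "\<And>K. K \<in> \<M> \<Longrightarrow> VK K \<subseteq> frontier K" "finite \<T>"
    "\<And>T. T \<in> \<T> \<Longrightarrow> int DIM('a) simplex T"
    "\<And>T. T \<in> \<T> \<Longrightarrow> \<exists>K\<in>\<M>. T \<subseteq> closure K \<and> xc K extreme_point_of T"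
    "\<And>K. K \<in> \<M> \<Longrightarrow> closure K = \<Union>{T\<in>\<T>. T \<subseteq> closure K}"
    "\<And>s. s \<in> Vt \<Longrightarrow> mV \<M> VK \<alpha> s > 0"
    "\<And>K. K \<in> \<M> \<Longrightarrow> mC VK \<alpha> K > 0"
    "\<And>K s. K \<in> \<M> \<Longrightarrow> s \<in> VK K \<Longrightarrow> mKs \<alpha> K s > 0"
    "\<And>K. K \<in> \<M> \<Longrightarrow> open (\<omega>K K) \<and> \<omega>K K \<subseteq> K \<and> measure lebesgue (\<omega>K K) = mC VK \<alpha> K"
    "\<And>K s. K \<in> \<M> \<Longrightarrow> s \<in> VK K \<Longrightarrow> open (\<omega>Ks K s) \<and> \<omega>Ks K s \<subseteq> K \<and>
                   measure lebesgue (\<omega>Ks K s) = mKs \<alpha> K s \<and> \<omega>K K \<inter> \<omega>Ks K s = {}"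
    "\<And>K s s'. K \<in> \<M> \<Longrightarrow> s \<in> VK K \<Longrightarrow> s' \<in> VK K \<Longrightarrow> s \<noteq> s' \<Longrightarrow> \<omega>Ks K s \<inter> \<omega>Ks K s' = {}"
proof -
  obtain a1: "finite \<M>" and a2: "\<M> \<noteq> {}"
    and a3: "\<forall>K\<in>\<M>. polyhedral_cell K \<and> K \<subseteq> \<Omega> \<and> star_shaped_wrt K (xc K)"
    and a4: "\<forall>K\<in>\<M>. \<forall>L\<in>\<M>. K \<noteq> L \<longrightarrow> K \<inter> L = {}"
    and a5: "\<Union>(closure ` \<M>) = closure \<Omega>"
    and a6: "finite Vt" and a7: "Vt = \<Union>(VK ` \<M>)"
    and a8: "\<forall>K\<in>\<M>. VK K \<subseteq> frontier K"
    and a9: "finite \<T>"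
    and a10: "\<forall>T\<in>\<T>. int DIM('a) simplex T"
    and a11: "\<forall>T\<in>\<T>. \<forall>T'\<in>\<T>. T \<noteq> T' \<longrightarrow> interior T \<inter> interior T' = {}"
    and a12: "\<forall>T\<in>\<T>. \<exists>K\<in>\<M>. T \<subseteq> closure K \<and> xc K extreme_point_of T \<and>
        convex hull {v. v extreme_point_of T \<and> v \<noteq> xc K} \<subseteq> frontier K"
    and a13: "\<forall>K\<in>\<M>. closure K = \<Union>{T\<in>\<T>. T \<subseteq> closure K}"
    and a14: "\<forall>K\<in>\<M>. \<forall>s\<in>VK K. \<exists>T\<in>\<T>. T \<subseteq> closure K \<and> s extreme_point_of T"
    and a15: "\<forall>K\<in>\<M>. (\<forall>s\<in>VK K. \<alpha> K s \<ge> 0) \<and> (\<Sum>s\<in>VK K. \<alpha> K s) \<le> 1"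
    and a16: "\<forall>K\<in>\<M>. \<forall>s\<in>VK K. mKs \<alpha> K s > 0"
    and a17: "\<forall>s\<in>Vt. mV \<M> VK \<alpha> s > 0"
    and a18: "\<forall>K\<in>\<M>. mC VK \<alpha> K > 0"
    and a19: "\<forall>K\<in>\<M>. open (\<omega>K K) \<and> \<omega>K K \<subseteq> K \<and> measure lebesgue (\<omega>K K) = mC VK \<alpha> K \<and>
        (\<forall>s\<in>VK K. open (\<omega>Ks K s) \<and> \<omega>Ks K s \<subseteq> K \<and>
                   measure lebesgue (\<omega>Ks K s) = mKs \<alpha> K s \<and> \<omega>K K \<inter> \<omega>Ks K s = {}) \<and>
        (\<forall>s\<in>VK K. \<forall>s'\<in>VK K. s \<noteq> s' \<longrightarrow> \<omega>Ks K s \<inter> \<omega>Ks K s' = {}) \<and>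
        closure K = closure (\<omega>K K) \<union> (\<Union>s\<in>VK K. closure (\<omega>Ks K s))"
    using disc unfolding discretization_def by (elim conjE) blast
  show "finite \<M>" "\<M> \<noteq> {}" "\<Union>(closure ` \<M>) = closure \<Omega>" "finite Vt" "Vt = \<Union>(VK ` \<M>)" "finite \<T>"
    by fact+
  show "\<And>K. K \<in> \<M> \<Longrightarrow> polyhedral_cell K \<and> K \<subseteq> \<Omega> \<and> star_shaped_wrt K (xc K)" using a3 by blast
  show "\<And>K L. K \<in> \<M> \<Longrightarrow> L \<in> \<M> \<Longrightarrow> K \<noteq> L \<Longrightarrow> K \<inter> L = {}" using a4 by blast
  show "\<And>K. K \<in> \<M> \<Longrightarrow> VK K \<subseteq> frontier K" using a8 by blast
  show "\<And>T. T \<in> \<T> \<Longrightarrow> int DIM('a) simplex T" using a10 by blast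
  show "\<And>T. T \<in> \<T> \<Longrightarrow> \<exists>K\<in>\<M>. T \<subseteq> closure K \<and> xc K extreme_point_of T" using a12 by blast
  show "\<And>K. K \<in> \<M> \<Longrightarrow> closure K = \<Union>{T\<in>\<T>. T \<subseteq> closure K}" using a13 by blast
  show "\<And>s. s \<in> Vt \<Longrightarrow> mV \<M> VK \<alpha> s > 0" using a17 by blast
  show "\<And>K. K \<in> \<M> \<Longrightarrow> mC VK \<alpha> K > 0" using a18 by blast
  show "\<And>K s. K \<in> \<M> \<Longrightarrow> s \<in> VK K \<Longrightarrow> mKs \<alpha> K s > 0" using a16 by blast
  show "\<And>K. K \<in> \<M> \<Longrightarrow> open (\<omega>K K) \<and> \<omega>K K \<subseteq> K \<and> measure lebesgue (\<omega>K K) = mC VK \<alpha> K"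
    using a19 by blast
  show "\<And>K s. K \<in> \<M> \<Longrightarrow> s \<in> VK K \<Longrightarrow> open (\<omega>Ks K s) \<and> \<omega>Ks K s \<subseteq> K \<and>
                   measure lebesgue (\<omega>Ks K s) = mKs \<alpha> K s \<and> \<omega>K K \<inter> \<omega>Ks K s = {}"
    using a19 by blast
  show "\<And>K s s'. K \<in> \<M> \<Longrightarrow> s \<in> VK K \<Longrightarrow> s' \<in> VK K \<Longrightarrow> s \<noteq> s' \<Longrightarrow> \<omega>Ks K s \<inter> \<omega>Ks K s' = {}"
    using a19 by blast
qed


lemma cellK: "K \<in> \<M> \<Longrightarrow> open K" "K \<in> \<M> \<Longrightarrow> K \<subseteq> \<Omega>" "K \<in> \<M> \<Longrightarrow> xc K \<in> K"
  "K \<in> \<M> \<Longrightarrow> y \<in> K \<Longrightarrow> closed_segment (xc K) y \<subseteq> K"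
  using dfacts(3)[of K] by (auto simp: polyhedral_cell_def polyhedral_open_def star_shaped_wrt_def)

lemma cell_simplex:
  assumes K: "K \<in> \<M>" and x: "x \<in> K"
  shows "\<exists>T\<in>\<T>. x \<in> T \<and> xc K \<in> T"
proof -
  have "x \<in> closure K" using x closure_subset by blast
  then obtain T where T: "T \<in> \<T>" "T \<subseteq> closure K" "x \<in> T" using dfacts(12)[OF K] by blast
  obtain K' where K': "K' \<in> \<M>" "T \<subseteq> closure K'" "xc K' extreme_point_of T" using dfacts(11)[OF T(1)] by blast
  have "K' = K"
  proof (rule ccontr)
    assume "K' \<noteq> K"
    then have "K \<inter> K' = {}" using dfacts(4) K K' by blast
    then have "K \<inter> closure K' = {}" using open_Int_closure_eq_empty cellK(1)[OF K] by blast
    then show False using x T(3) K'(2) by blast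
  qed
  then show ?thesis using T K' by (auto simp: extreme_point_of_def)
qed

lemma T_bounded: "T \<in> \<T> \<Longrightarrow> bounded T"
  using simplex_bounded[OF dfacts(10)] compact_imp_bounded by blast

lemma h_ge: "T \<in> \<T> \<Longrightarrow> diameter T \<le> h_mesh \<T>"
  unfolding h_mesh_def using dfacts(9) by (intro Max_ge) auto

lemma T_ne: "\<T> \<noteq> {}"
proof -
  obtain K where K: "K \<in> \<M>" using dfacts(2) by blast
  then show ?thesis using cell_simplex[OF K cellK(3)[OF K]] by blast
qed

lemma h_nonneg: "0 \<le> h_mesh \<T>"
proof -
  obtain T where "T \<in> \<T>" using T_ne by blast
  then show ?thesis using h_ge diameter_ge_0[OF T_bounded] by (meson order_trans)
qed

lemma h_le_diam:
  assumes "bounded \<Omega>"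
  shows "h_mesh \<T> \<le> diameter \<Omega>"
proof -
  have "h_mesh \<T> \<in> diameter ` \<T>" unfolding h_mesh_def using dfacts(9) T_ne by (intro Max_in) auto
  then obtain T where T: "T \<in> \<T>" "h_mesh \<T> = diameter T" by auto
  obtain K where K: "K \<in> \<M>" "T \<subseteq> closure K" using dfacts(11)[OF T(1)] by blast
  have "closure K \<subseteq> closure \<Omega>" using closure_mono cellK(2)[OF K(1)] by blast
  then have "diameter T \<le> diameter (closure \<Omega>)"
    using K(2) assms by (intro diameter_subset) auto
  then show ?thesis using T(2) diameter_closure[OF assms] by simp
qed

lemma dist_xc: "K \<in> \<M> \<Longrightarrow> x \<in> K \<Longrightarrow> norm (x - xc K) \<le> h_mesh \<T>"
  using cell_simplex[of K x] diameter_bounded_bound[OF T_bounded] h_ge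
  by (metis dist_norm order_trans)

lemma V_cell_bound:
  fixes V :: "'a \<Rightarrow> real"
  assumes oO: "open \<Omega>" and lip: "L-lipschitz_on (closure \<Omega>) V" and N: "N \<in> null_sets lborel"
    and der: "\<And>x. x \<in> \<Omega> - N \<Longrightarrow> \<exists>D. (V has_derivative D) (at x) \<and> onorm D \<le> G"
    and G: "G \<ge> 0" and K: "K \<in> \<M>" and x: "x \<in> closure K"
  shows "\<bar>V x - V (xc K)\<bar> \<le> G * h_mesh \<T>"
proof -
  have lipO: "L-lipschitz_on \<Omega> V" using lip lipschitz_on_subset closure_subset by blast
  have inK: "\<bar>V y - V (xc K)\<bar> \<le> G * h_mesh \<T>" if y: "y \<in> K" for y
  proof -
    have "closed_segment (xc K) y \<subseteq> \<Omega>" using cellK(4)[OF K y] cellK(2)[OF K] by blast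
    then have "\<bar>V y - V (xc K)\<bar> \<le> G * norm (y - xc K)"
      using segment_lip_bound[OF oO lipO N, of G] der by blast
    also have "\<dots> \<le> G * h_mesh \<T>" using dist_xc[OF K y] G by (simp add: mult_left_mono)
    finally show ?thesis .
  qed
  define S where "S = closure \<Omega> \<inter> (\<lambda>y. \<bar>V y - V (xc K)\<bar>) -` {..G * h_mesh \<T>}"
  have cont: "continuous_on (closure \<Omega>) (\<lambda>y. \<bar>V y - V (xc K)\<bar>)"
    using lipschitz_on_continuous_on[OF lip] by (intro continuous_intros)
  have "closed S" unfolding S_def by (rule continuous_closed_preimage[OF cont closed_closure closed_atMost])
  moreover have "K \<subseteq> S" unfolding S_def using inK cellK(2)[OF K] closure_subset by fastforce
  ultimately have "closure K \<subseteq> S" by (rule closure_minimal[rotated])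
  then show ?thesis using x by (auto simp: S_def)
qed


definition "PI = Inl ` \<M> \<union> Inr ` Vt"
definition "Pc = case_sum \<omega>K (omega_v \<M> VK \<omega>Ks)"

lemma finPI: "finite PI" unfolding PI_def using dfacts(1,6) by simp

lemma piD_sum:
  "piD \<M> Vt VK \<omega>K \<omega>Ks vK vs x = (\<Sum>i\<in>PI. case_sum vK vs i * indicator (Pc i) x)"
proof -
  have "(\<Sum>i\<in>PI. case_sum vK vs i * indicator (Pc i) x)
      = (\<Sum>i\<in>Inl ` \<M>. case_sum vK vs i * indicator (Pc i) x) + (\<Sum>i\<in>Inr ` Vt. case_sum vK vs i * indicator (Pc i) x)"
    unfolding PI_def using dfacts(1,6) by (intro sum.union_disjoint) auto
  also have "\<dots> = (\<Sum>K\<in>\<M>. vK K * indicator (\<omega>K K) x) + (\<Sum>s\<in>Vt. vs s * indicator (omega_v \<M> VK \<omega>Ks s) x)"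
    by (simp add: sum.reindex Pc_def)
  finally show ?thesis by (simp add: piD_def)
qed

lemma cells_of_sub: "cells_of \<M> VK s \<subseteq> \<M>" by (auto simp: cells_of_def)

lemma omega_v_sub: "omega_v \<M> VK \<omega>Ks s \<subseteq> \<Omega>"
  unfolding omega_v_def
proof (rule UN_least)
  fix K assume "K \<in> cells_of \<M> VK s"
  then have K: "K \<in> \<M>" "s \<in> VK K" by (auto simp: cells_of_def)
  have "\<omega>Ks K s \<subseteq> K" using dfacts(17)[OF K] by blast
  then show "\<omega>Ks K s \<subseteq> \<Omega>" using cellK(2)[OF K(1)] by blast
qed

lemma omega_v_open: "open (omega_v \<M> VK \<omega>Ks s)"
  unfolding omega_v_def cells_of_def using dfacts(17) by (intro open_UN) auto

lemma mem_omega_v: "x \<in> omega_v \<M> VK \<omega>Ks s \<longleftrightarrow> (\<exists>K\<in>\<M>. s \<in> VK K \<and> x \<in> \<omega>Ks K s)"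
  by (auto simp: omega_v_def cells_of_def)

lemma Pc_sub: "i \<in> PI \<Longrightarrow> Pc i \<subseteq> \<Omega>"
proof (cases i)
  case (Inl K)
  assume "i \<in> PI"
  then have "K \<in> \<M>" using Inl by (auto simp: PI_def)
  then have "\<omega>K K \<subseteq> K" "K \<subseteq> \<Omega>" using dfacts(16) cellK(2) by blast+
  then show ?thesis using Inl by (simp add: Pc_def)
next
  case (Inr s)
  then show ?thesis using omega_v_sub by (simp add: Pc_def)
qed

lemma Pc_open: "i \<in> PI \<Longrightarrow> open (Pc i)"
proof (cases i)
  case (Inl K)
  assume "i \<in> PI"
  then have "K \<in> \<M>" using Inl by (auto simp: PI_def)
  then show ?thesis using Inl dfacts(16) by (simp add: Pc_def)
next
  case (Inr s)
  then show ?thesis using omega_v_open by (simp add: Pc_def)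
qed

lemma Pc_disj:
  assumes "i \<in> PI" "j \<in> PI" "i \<noteq> j"
  shows "Pc i \<inter> Pc j = {}"
proof -
  have cd: "A \<inter> B = {}" if "K \<in> \<M>" "L \<in> \<M>" "K \<noteq> L" "A \<subseteq> K" "B \<subseteq> L" for K L A B
    using dfacts(4)[OF that(1-3)] that(4,5) by blast
  have sK: "\<omega>Ks K s \<subseteq> K" if "K \<in> \<M>" "s \<in> VK K" for K s using dfacts(17)[OF that] by blast
  have oK: "\<omega>K K \<subseteq> K" if "K \<in> \<M>" for K using dfacts(16)[OF that] by blast
  show ?thesis
  proof (cases i)
    case (Inl K)
    then have K: "K \<in> \<M>" using assms(1) by (auto simp: PI_def)
    show ?thesis
    proof (cases j)
      case (Inl L)
      then have "L \<in> \<M>" "K \<noteq> L" using assms \<open>i = Inl K\<close> by (auto simp: PI_def)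
      then show ?thesis using cd[OF K, of L] oK K \<open>i = Inl K\<close> Inl by (simp add: Pc_def)
    next
      case (Inr s)
      have "\<omega>K K \<inter> \<omega>Ks L s = {}" if "L \<in> \<M>" "s \<in> VK L" for L
      proof (cases "L = K")
        case True then show ?thesis using dfacts(17) that by blast
      next
        case False show ?thesis by (rule cd[OF K that(1)]) (use False oK[OF K] sK[OF that] in auto)
      qed
      then have "\<omega>K K \<inter> omega_v \<M> VK \<omega>Ks s = {}" unfolding omega_v_def cells_of_def by blast
      then show ?thesis using \<open>i = Inl K\<close> Inr by (simp add: Pc_def)
    qed
  next
    case (Inr s)
    show ?thesis
    proof (cases j)
      case (Inl L)
      then have L: "L \<in> \<M>" using assms(2) by (auto simp: PI_def)
      have "\<omega>K L \<inter> \<omega>Ks K s = {}" if "K \<in> \<M>" "s \<in> VK K" for K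
      proof (cases "L = K")
        case True then show ?thesis using dfacts(17) that by blast
      next
        case False show ?thesis by (rule cd[OF L that(1)]) (use False oK[OF L] sK[OF that] in auto)
      qed
      then have "omega_v \<M> VK \<omega>Ks s \<inter> \<omega>K L = {}" unfolding omega_v_def cells_of_def by blast
      then show ?thesis using \<open>i = Inr s\<close> Inl by (simp add: Pc_def)
    next
      case (Inr s')
      then have ss: "s \<noteq> s'" using assms \<open>i = Inr s\<close> by auto
      have "\<omega>Ks K s \<inter> \<omega>Ks L s' = {}" if "K \<in> \<M>" "s \<in> VK K" "L \<in> \<M>" "s' \<in> VK L" for K L
      proof (cases "L = K")
        case True then show ?thesis using dfacts(18) that ss by blast
      next
        case False show ?thesis by (rule cd[OF that(1) that(3)]) (use False sK[OF that(1,2)] sK[OF that(3,4)] in auto)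
      qed
      then have "omega_v \<M> VK \<omega>Ks s \<inter> omega_v \<M> VK \<omega>Ks s' = {}" unfolding omega_v_def cells_of_def by blast
      then show ?thesis using \<open>i = Inr s\<close> Inr by (simp add: Pc_def)
    qed
  qed
qed

context
  assumes bdd: "bounded \<Omega>"
begin

lemma lmeas: "A \<subseteq> \<Omega> \<Longrightarrow> open A \<Longrightarrow> A \<in> lmeasurable"
  using lmeasurable_open bounded_subset bdd by blast

lemma Pc_lmeas: "i \<in> PI \<Longrightarrow> Pc i \<in> lmeasurable"
  using lmeas Pc_sub Pc_open by blast

lemma measure_omega_v: "s \<in> Vt \<Longrightarrow> measure lebesgue (omega_v \<M> VK \<omega>Ks s) = mV \<M> VK \<alpha> s"
proof -
  have fin: "finite (cells_of \<M> VK s)" using cells_of_sub dfacts(1) finite_subset by blast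
  have lm: "\<omega>Ks K s \<in> lmeasurable" if "K \<in> cells_of \<M> VK s" for K
  proof -
    have K: "K \<in> \<M>" "s \<in> VK K" using that by (auto simp: cells_of_def)
    have "open (\<omega>Ks K s)" "\<omega>Ks K s \<subseteq> K" using dfacts(17)[OF K] by blast+
    then show ?thesis using lmeas cellK(2)[OF K(1)] by blast
  qed
  have dj: "disjoint_family_on (\<lambda>K. \<omega>Ks K s) (cells_of \<M> VK s)"
    unfolding disjoint_family_on_def
  proof (intro ballI impI)
    fix K L assume a: "K \<in> cells_of \<M> VK s" "L \<in> cells_of \<M> VK s" "K \<noteq> L"
    then have K: "K \<in> \<M>" "s \<in> VK K" and L: "L \<in> \<M>" "s \<in> VK L" by (auto simp: cells_of_def)
    have "\<omega>Ks K s \<subseteq> K" "\<omega>Ks L s \<subseteq> L" using dfacts(17)[OF K] dfacts(17)[OF L] by blast+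
    moreover have "K \<inter> L = {}" using dfacts(4)[OF K(1) L(1) a(3)] .
    ultimately show "\<omega>Ks K s \<inter> \<omega>Ks L s = {}" by blast
  qed
  have s1: "(\<lambda>K. \<omega>Ks K s) ` cells_of \<M> VK s \<subseteq> sets lebesgue" using lm by blast
  have s2: "emeasure lebesgue (\<omega>Ks K s) \<noteq> \<infinity>" if "K \<in> cells_of \<M> VK s" for K
    using fmeasurableD2[OF lm[OF that]] by simp
  have "measure lebesgue (\<Union>K\<in>cells_of \<M> VK s. \<omega>Ks K s) = (\<Sum>K\<in>cells_of \<M> VK s. measure lebesgue (\<omega>Ks K s))"
    by (rule measure_finite_Union[OF fin s1 dj s2])
  also have "\<dots> = (\<Sum>K\<in>cells_of \<M> VK s. mKs \<alpha> K s)"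
  proof (rule sum.cong[OF refl])
    fix K assume "K \<in> cells_of \<M> VK s"
    then have K: "K \<in> \<M>" "s \<in> VK K" by (auto simp: cells_of_def)
    show "measure lebesgue (\<omega>Ks K s) = mKs \<alpha> K s" using dfacts(17)[OF K] by blast
  qed
  finally show ?thesis by (simp only: omega_v_def mV_def)
qed

lemma measure_Pc_Inl: "K \<in> \<M> \<Longrightarrow> measure lebesgue (Pc (Inl K)) = mC VK \<alpha> K"
proof -
  assume K: "K \<in> \<M>"
  have "measure lebesgue (\<omega>K K) = mC VK \<alpha> K" using dfacts(16)[OF K] by blast
  then show ?thesis by (simp only: Pc_def sum.case)
qed

lemma measure_Pc_Inr: "s \<in> Vt \<Longrightarrow> measure lebesgue (Pc (Inr s)) = mV \<M> VK \<alpha> s"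
  using measure_omega_v by (simp add: Pc_def)

lemma Pc_pos: "i \<in> PI \<Longrightarrow> 0 < measure lebesgue (Pc i)"
  using measure_Pc_Inl measure_Pc_Inr dfacts(13,14) by (auto simp: PI_def)


lemma cell_rest_null:
  assumes K: "K \<in> \<M>"
  shows "K - (\<omega>K K \<union> (\<Union>s\<in>VK K. \<omega>Ks K s)) \<in> null_sets lebesgue"
proof -
  define B where "B = (\<Union>s\<in>VK K. \<omega>Ks K s)"
  have "VK K \<subseteq> \<Union>(VK ` \<M>)" using K by blast
  then have "VK K \<subseteq> Vt" using dfacts(7) by simp
  then have finV: "finite (VK K)" using dfacts(6) finite_subset by blast
  have Klm: "K \<in> lmeasurable" using lmeas cellK(1,2)[OF K] by blast
  have oK: "open (\<omega>K K)" "\<omega>K K \<subseteq> K" "measure lebesgue (\<omega>K K) = mC VK \<alpha> K"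
    using dfacts(16)[OF K] by blast+
  have oKlm: "\<omega>K K \<in> lmeasurable" using lmeas[OF _ oK(1)] oK(2) cellK(2)[OF K] by blast
  have oKs: "open (\<omega>Ks K s)" "\<omega>Ks K s \<subseteq> K" "measure lebesgue (\<omega>Ks K s) = mKs \<alpha> K s"
     "\<omega>K K \<inter> \<omega>Ks K s = {}" if "s \<in> VK K" for s
    using dfacts(17)[OF K that] by blast+
  have lm: "\<omega>Ks K s \<in> lmeasurable" if "s \<in> VK K" for s
    using lmeas[OF _ oKs(1)[OF that]] oKs(2)[OF that] cellK(2)[OF K] by blast
  have dj: "disjoint_family_on (\<lambda>s. \<omega>Ks K s) (VK K)"
    unfolding disjoint_family_on_def using dfacts(18)[OF K] by blast
  have s1: "(\<lambda>s. \<omega>Ks K s) ` VK K \<subseteq> sets lebesgue" using lm by blast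
  have s2: "emeasure lebesgue (\<omega>Ks K s) \<noteq> \<infinity>" if "s \<in> VK K" for s
    using fmeasurableD2[OF lm[OF that]] by simp
  have mB: "measure lebesgue B = (\<Sum>s\<in>VK K. mKs \<alpha> K s)"
  proof -
    have "measure lebesgue B = (\<Sum>s\<in>VK K. measure lebesgue (\<omega>Ks K s))"
      unfolding B_def by (rule measure_finite_Union[OF finV s1 dj s2])
    also have "\<dots> = (\<Sum>s\<in>VK K. mKs \<alpha> K s)"
    proof (rule sum.cong[OF refl])
      fix s assume "s \<in> VK K"
      then show "measure lebesgue (\<omega>Ks K s) = mKs \<alpha> K s" by (rule oKs(3))
    qed
    finally show ?thesis .
  qed
  have Blm: "B \<in> lmeasurable" unfolding B_def
    by (rule fmeasurable.finite_UN[OF finV]) (use lm in blast)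
  have Bsub: "B \<subseteq> K" unfolding B_def using oKs(2) by blast
  have djB: "\<omega>K K \<inter> B = {}" unfolding B_def using oKs(4) by blast
  have "measure lebesgue (\<omega>K K \<union> B) = measure lebesgue (\<omega>K K) + measure lebesgue B"
    by (rule measure_Union) (use fmeasurableD2[OF oKlm] fmeasurableD2[OF Blm] fmeasurableD[OF oKlm] fmeasurableD[OF Blm] djB in \<open>simp_all\<close>)
  also have "\<dots> = measure lebesgue K"
    using oK(3) mB by (simp add: mC_def)
  finally have mA: "measure lebesgue (\<omega>K K \<union> B) = measure lebesgue K" .
  have AK: "\<omega>K K \<union> B \<subseteq> K" using oK(2) Bsub by blast
  have Asets: "\<omega>K K \<union> B \<in> sets lebesgue" by (rule sets.Un[OF fmeasurableD[OF oKlm] fmeasurableD[OF Blm]])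
  have "measure lebesgue (K - (\<omega>K K \<union> B)) = measure lebesgue K - measure lebesgue (\<omega>K K \<union> B)"
    by (rule measure_Diff[OF _ fmeasurableD[OF Klm] Asets AK]) (use fmeasurableD2[OF Klm] in simp)
  then have m0: "measure lebesgue (K - (\<omega>K K \<union> B)) = 0" using mA by simp
  have lmD: "K - (\<omega>K K \<union> B) \<in> lmeasurable" by (rule fmeasurable_Diff[OF Klm Asets])
  have "emeasure lebesgue (K - (\<omega>K K \<union> B)) = 0"
    using emeasure_eq_measure2[OF lmD] m0 by simp
  then have "K - (\<omega>K K \<union> B) \<in> null_sets lebesgue" by (rule null_setsI[OF _ fmeasurableD[OF lmD]])
  then show ?thesis unfolding B_def .
qed

lemma cover_null:
  assumes oO: "open \<Omega>"
  shows "\<Omega> - (\<Union>i\<in>PI. Pc i) \<in> null_sets lebesgue"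
proof -
  define Z where "Z = (\<Union>K\<in>\<M>. frontier K) \<union> (\<Union>K\<in>\<M>. K - (\<omega>K K \<union> (\<Union>s\<in>VK K. \<omega>Ks K s)))"
  have sub: "\<Omega> - (\<Union>i\<in>PI. Pc i) \<subseteq> Z"
  proof
    fix x assume x: "x \<in> \<Omega> - (\<Union>i\<in>PI. Pc i)"
    then have "x \<in> closure \<Omega>" using closure_subset by blast
    then obtain K where K: "K \<in> \<M>" "x \<in> closure K" using dfacts(5) by blast
    show "x \<in> Z"
    proof (cases "x \<in> K")
      case False
      then have "x \<in> frontier K" using K(2) cellK(1)[OF K(1)] by (simp add: frontier_def interior_open)
      then show ?thesis using K(1) unfolding Z_def by blast
    next
      case True
      have n1: "x \<notin> \<omega>K K"
      proof
        assume "x \<in> \<omega>K K"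
        then have "x \<in> Pc (Inl K)" by (simp add: Pc_def)
        moreover have "Inl K \<in> PI" using K(1) by (simp add: PI_def)
        ultimately show False using x by blast
      qed
      have n2: "x \<notin> \<omega>Ks K s" if s: "s \<in> VK K" for s
      proof
        assume "x \<in> \<omega>Ks K s"
        then have "x \<in> Pc (Inr s)" using K(1) s by (simp add: Pc_def mem_omega_v) blast
        moreover have "s \<in> Vt" using K(1) s dfacts(7) by blast
        then have "Inr s \<in> PI" by (simp add: PI_def)
        ultimately show False using x by blast
      qed
      show ?thesis using True n1 n2 K(1) unfolding Z_def by blast
    qed
  qed
  have fr: "frontier K \<in> null_sets lebesgue" if "K \<in> \<M>" for K
    using polyhedral_cell_frontier_negligible dfacts(3)[OF that] negligible_iff_null_sets by blast
  have "Z \<in> null_sets lebesgue" unfolding Z_def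
    using fr cell_rest_null dfacts(1)
    by (intro null_sets.Un null_sets_UN') (auto intro: countable_finite)
  moreover have "\<Omega> - (\<Union>i\<in>PI. Pc i) \<in> sets lebesgue"
    using oO Pc_open finPI by (intro sets.Diff sets.finite_UN borel_open[THEN sets_completionI_sets]) auto
  ultimately show ?thesis using sub null_sets_subset by blast
qed


lemma main_bound:
  fixes p :: "real \<Rightarrow> real" and u0 V :: "'a \<Rightarrow> real" and G L :: real
  assumes oO: "open \<Omega>" and ad: "admissible_p p" and u0i: "set_integrable lebesgue \<Omega> u0"
    and nn: "AE x in lebesgue. x \<in> \<Omega> \<longrightarrow> u0 x \<ge> 0"
    and finG: "(\<integral>\<^sup>+ x\<in>\<Omega>. e2ennreal (Gam p (u0 x)) \<partial>lebesgue) < \<infinity>"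
    and lip: "L-lipschitz_on (closure \<Omega>) V"
    and der: "AE x in lebesgue. x \<in> \<Omega> \<longrightarrow> (\<exists>D. (V has_derivative D) (at x) \<and> onorm D \<le> G)"
  shows "let uK = (\<lambda>K. (LINT x:\<omega>K K|lebesgue. u0 x) / mC VK \<alpha> K);
          us = (\<lambda>s. (LINT x:omega_v \<M> VK \<omega>Ks s|lebesgue. u0 x) / mV \<M> VK \<alpha> s);
          ED = Energy p \<Omega> (piD \<M> Vt VK \<omega>K \<omega>Ks (\<lambda>K. V (xc K)) V)
                          (piD \<M> Vt VK \<omega>K \<omega>Ks uK us);
          C = 2 * (LINT x:\<Omega>|lebesgue. \<bar>u0 x\<bar>) * max G 0
      in ED \<le> Energy p \<Omega> V u0 + ereal (C * h_mesh \<T>) \<and>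
         Energy p \<Omega> V u0 + ereal (C * h_mesh \<T>) \<le> Energy p \<Omega> V u0 + ereal (C * diameter \<Omega>) \<and>
         ED < \<infinity>"
proof -
  define G' where "G' = max G 0"
  have G'0: "G' \<ge> 0" by (simp add: G'_def)
  define h where "h = h_mesh \<T>"
  have h0: "h \<ge> 0" using h_nonneg by (simp add: h_def)
  define uK where "uK = (\<lambda>K. (LINT x:\<omega>K K|lebesgue. u0 x) / mC VK \<alpha> K)"
  define us where "us = (\<lambda>s. (LINT x:omega_v \<M> VK \<omega>Ks s|lebesgue. u0 x) / mV \<M> VK \<alpha> s)"
  define a where "a = case_sum uK us"
  define w where "w = case_sum (\<lambda>K. V (xc K)) V"
  define A where "A = (LINT x:\<Omega>|lebesgue. \<bar>u0 x\<bar>)"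
  define C where "C = 2 * A * G'"
  have A0: "A \<ge> 0" unfolding A_def set_lebesgue_integral_def
    by (rule Bochner_Integration.integral_nonneg) (simp add: indicator_def)
  have C0: "C \<ge> 0" using A0 G'0 by (simp add: C_def)
  have "AE x in lborel. x \<in> \<Omega> \<longrightarrow> (\<exists>D. (V has_derivative D) (at x) \<and> onorm D \<le> G)"
    using der AE_completion_iff by blast
  then obtain N where N: "{x \<in> space lborel. \<not> (x \<in> \<Omega> \<longrightarrow> (\<exists>D. (V has_derivative D) (at x) \<and> onorm D \<le> G))} \<subseteq> N"
    "emeasure lborel N = 0" "N \<in> sets lborel" by (rule AE_E)
  have Nnull: "N \<in> null_sets lborel" using N by auto
  have derN: "\<exists>D. (V has_derivative D) (at x) \<and> onorm D \<le> G'" if "x \<in> \<Omega> - N" for x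
    using that N(1) unfolding G'_def by fastforce
  have Vbd: "\<bar>V x - V (xc K)\<bar> \<le> G' * h" if "K \<in> \<M>" "x \<in> closure K" for K x
    unfolding h_def by (rule V_cell_bound[OF oO lip Nnull derN G'0 that])
  interpret P: pieces \<Omega> PI Pc u0
  proof
    show "finite PI" by (rule finPI)
    show "\<And>i. i \<in> PI \<Longrightarrow> Pc i \<in> sets lebesgue" using Pc_lmeas by blast
    show "\<And>i. i \<in> PI \<Longrightarrow> Pc i \<subseteq> \<Omega>" by (rule Pc_sub)
    show "\<And>i. i \<in> PI \<Longrightarrow> 0 < measure lebesgue (Pc i)" by (rule Pc_pos)
    show "\<And>i. i \<in> PI \<Longrightarrow> emeasure lebesgue (Pc i) < \<infinity>"
      using Pc_lmeas fmeasurableD2 by (metis infinity_ennreal_def less_top)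
    show "\<And>i j. i \<in> PI \<Longrightarrow> j \<in> PI \<Longrightarrow> i \<noteq> j \<Longrightarrow> Pc i \<inter> Pc j = {}" by (rule Pc_disj)
    show "\<Omega> - (\<Union>i\<in>PI. Pc i) \<in> null_sets lebesgue" by (rule cover_null[OF oO])
    show "\<Omega> \<in> sets lebesgue" using oO by (simp add: borel_open sets_completionI_sets)
    show "set_integrable lebesgue \<Omega> u0" by (rule u0i)
    show "AE x in lebesgue. x \<in> \<Omega> \<longrightarrow> u0 x \<ge> 0" by (rule nn)
  qed
  have avg: "a i = (LINT x:Pc i|lebesgue. u0 x) / measure lebesgue (Pc i)" if "i \<in> PI" for i
  proof (cases i)
    case (Inl K)
    then have K: "K \<in> \<M>" using that by (auto simp: PI_def)
    show ?thesis using measure_Pc_Inl[OF K] Inl by (simp add: a_def uK_def Pc_def)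
  next
    case (Inr s)
    then have s: "s \<in> Vt" using that by (auto simp: PI_def)
    show ?thesis using measure_Pc_Inr[OF s] Inr by (simp add: a_def us_def Pc_def)
  qed
  have U_eq: "piD \<M> Vt VK \<omega>K \<omega>Ks uK us x = (\<Sum>i\<in>PI. a i * indicator (Pc i) x)" for x
    unfolding piD_sum a_def ..
  have W_eq: "piD \<M> Vt VK \<omega>K \<omega>Ks (\<lambda>K. V (xc K)) V x = (\<Sum>i\<in>PI. w i * indicator (Pc i) x)" for x
    unfolding piD_sum w_def ..
  define XU where "XU = (\<integral>\<^sup>+x\<in>\<Omega>. e2ennreal (Gam p (piD \<M> Vt VK \<omega>K \<omega>Ks uK us x)) \<partial>lebesgue)"
  define X0 where "X0 = (\<integral>\<^sup>+x\<in>\<Omega>. e2ennreal (Gam p (u0 x)) \<partial>lebesgue)"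
  have XUX0: "XU \<le> X0" unfolding XU_def X0_def U_eq by (rule P.gamma_part[OF ad avg])
  define YU where "YU = (LINT x:\<Omega>|lebesgue. piD \<M> Vt VK \<omega>K \<omega>Ks uK us x * piD \<M> Vt VK \<omega>K \<omega>Ks (\<lambda>K. V (xc K)) V x)"
  define Y0 where "Y0 = (LINT x:\<Omega>|lebesgue. u0 x * V x)"
  have contV: "continuous_on (closure \<Omega>) V" using lip lipschitz_on_continuous_on by blast
  obtain MV where MV: "\<And>x. x \<in> closure \<Omega> \<Longrightarrow> \<bar>V x\<bar> \<le> MV"
  proof -
    have "compact (closure \<Omega>)" using bdd by (simp add: compact_closure)
    then have "bounded (V ` closure \<Omega>)" using compact_continuous_image[OF contV] compact_imp_bounded by blast
    then show ?thesis using that by (auto simp: bounded_real)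
  qed
  have uV: "set_integrable lebesgue \<Omega> (\<lambda>x. u0 x * V x)"
  proof -
    have m1: "(\<lambda>x. indicator \<Omega> x *\<^sub>R V x) \<in> borel_measurable borel"
      by (rule borel_measurable_continuous_on_indicator) (use oO continuous_on_subset[OF contV closure_subset] in auto)
    then have m1': "(\<lambda>x. indicator \<Omega> x * V x) \<in> borel_measurable lebesgue"
      by (simp add: measurable_completion)
    have "(\<lambda>x. indicator \<Omega> x * (u0 x * V x)) = (\<lambda>x. P.u' x * (indicator \<Omega> x * V x))"
      by (auto simp: P.u'_def indicator_def fun_eq_iff)
    moreover have "integrable lebesgue (\<lambda>x. P.u' x * (indicator \<Omega> x * V x))"
    proof (rule Bochner_Integration.integrable_bound)
      show "integrable lebesgue (\<lambda>x. MV * P.u' x)" using P.u'i by simp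
      show "(\<lambda>x. P.u' x * (indicator \<Omega> x * V x)) \<in> borel_measurable lebesgue"
        using P.u'm m1' by measurable
      show "AE x in lebesgue. norm (P.u' x * (indicator \<Omega> x * V x)) \<le> norm (MV * P.u' x)"
      proof (intro AE_I2)
        fix x
        show "norm (P.u' x * (indicator \<Omega> x * V x)) \<le> norm (MV * P.u' x)"
        proof (cases "x \<in> \<Omega>")
          case True
          then have "\<bar>V x\<bar> \<le> MV" using MV closure_subset by blast
          then have "\<bar>V x\<bar> * \<bar>P.u' x\<bar> \<le> MV * \<bar>P.u' x\<bar>" by (simp add: mult_right_mono)
          moreover have "MV * \<bar>P.u' x\<bar> \<le> \<bar>MV * P.u' x\<bar>" by (simp add: abs_mult mult_right_mono)
          ultimately show ?thesis using True by (simp add: abs_mult mult.commute)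
        next
          case False then show ?thesis by (simp add: P.u'_def)
        qed
      qed
    qed
    ultimately show ?thesis by (simp add: set_integrable_def)
  qed
  have Bnd: "AE x in lebesgue. x \<in> \<Omega> \<longrightarrow> \<bar>(\<Sum>j\<in>PI. w j * indicator (Pc j) x) - V x\<bar> \<le> 2 * G' * h"
    using P.ae_cover
  proof eventually_elim
    case (elim x)
    show ?case
    proof
      assume "x \<in> \<Omega>"
      then obtain i where i: "i \<in> PI" "x \<in> Pc i" using elim by blast
      have "(\<Sum>j\<in>PI. w j * indicator (Pc j) x) = w i" by (rule P.single[OF i])
      moreover have "\<bar>w i - V x\<bar> \<le> 2 * G' * h"
      proof (cases i)
        case (Inl K)
        then have K: "K \<in> \<M>" and xK: "x \<in> \<omega>K K" using i by (auto simp: PI_def Pc_def)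
        have "x \<in> closure K" using xK dfacts(16)[OF K] closure_subset by blast
        then have "\<bar>V x - V (xc K)\<bar> \<le> G' * h" by (rule Vbd[OF K])
        moreover have "G' * h \<le> 2 * G' * h" using G'0 h0 by simp
        ultimately show ?thesis using Inl by (simp add: w_def abs_minus_commute)
      next
        case (Inr s)
        then obtain K where K: "K \<in> \<M>" "s \<in> VK K" "x \<in> \<omega>Ks K s" using i by (auto simp: Pc_def mem_omega_v)
        have "x \<in> closure K" using K(3) dfacts(17)[OF K(1,2)] closure_subset by blast
        then have b1: "\<bar>V x - V (xc K)\<bar> \<le> G' * h" by (rule Vbd[OF K(1)])
        have "s \<in> closure K" using dfacts(8)[OF K(1)] K(2) by (auto simp: frontier_def)
        then have b2: "\<bar>V s - V (xc K)\<bar> \<le> G' * h" by (rule Vbd[OF K(1)])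
        show ?thesis using Inr b1 b2 by (simp add: w_def)
      qed
      ultimately show "\<bar>(\<Sum>j\<in>PI. w j * indicator (Pc j) x) - V x\<bar> \<le> 2 * G' * h" by simp
    qed
  qed
  have "YU \<le> Y0 + (2 * G' * h) * A"
    unfolding YU_def Y0_def A_def U_eq W_eq by (rule P.V_part[OF avg uV Bnd])
  then have YUY0: "YU \<le> Y0 + C * h" by (simp add: C_def algebra_simps)
  have ED: "Energy p \<Omega> (piD \<M> Vt VK \<omega>K \<omega>Ks (\<lambda>K. V (xc K)) V) (piD \<M> Vt VK \<omega>K \<omega>Ks uK us) = enn2ereal XU + ereal YU"
    by (simp add: Energy_def XU_def YU_def)
  have E0: "Energy p \<Omega> V u0 = enn2ereal X0 + ereal Y0"
    by (simp add: Energy_def X0_def Y0_def)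
  have i1: "enn2ereal XU + ereal YU \<le> enn2ereal X0 + ereal Y0 + ereal (C * h)"
  proof -
    have "enn2ereal XU \<le> enn2ereal X0" using XUX0 by (simp add: less_eq_ennreal.rep_eq)
    moreover have "ereal YU \<le> ereal Y0 + ereal (C * h)" using YUY0 by simp
    ultimately have "enn2ereal XU + ereal YU \<le> enn2ereal X0 + (ereal Y0 + ereal (C * h))"
      by (rule add_mono)
    then show ?thesis by (simp add: add.assoc)
  qed
  have i2: "enn2ereal X0 + ereal Y0 + ereal (C * h) \<le> enn2ereal X0 + ereal Y0 + ereal (C * diameter \<Omega>)"
  proof -
    have "C * h \<le> C * diameter \<Omega>" using h_le_diam[OF bdd] C0 by (simp add: h_def mult_left_mono)
    then show ?thesis by (intro add_mono) auto
  qed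
  have i3: "enn2ereal XU + ereal YU < \<infinity>"
  proof -
    have "XU < top" using XUX0 finG by (simp add: X0_def)
    then have "enn2ereal XU < \<infinity>" by (simp add: less_ennreal.rep_eq)
    then show ?thesis by simp
  qed
  show ?thesis unfolding Let_def
    using i1 i2 i3 ED E0 by (simp add: uK_def us_def C_def G'_def A_def h_def)
qed

end

end


theorem lemma2p1:
  "\<exists>F :: real \<Rightarrow> real \<Rightarrow> real.
   \<forall>(\<Omega> :: 'a::euclidean_space set) p u0 V G \<M> xc Vt VK \<T> \<alpha> \<omega>K \<omega>Ks.
     DIM('a) \<in> {2, 3} \<and>
     connected \<Omega> \<and> bounded \<Omega> \<and> polyhedral_open \<Omega> \<and>
     admissible_p p \<and>
     discretization \<Omega> \<M> xc Vt VK \<T> \<alpha> \<omega>K \<omega>Ks \<and>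
     set_integrable lebesgue \<Omega> u0 \<and>
     (AE x in lebesgue. x \<in> \<Omega> \<longrightarrow> u0 x \<ge> 0) \<and>
     (LINT x:\<Omega>|lebesgue. u0 x) > 0 \<and>
     (\<integral>\<^sup>+ x\<in>\<Omega>. e2ennreal (Gam p (u0 x)) \<partial>lebesgue) < \<infinity> \<and>
     (\<exists>L. L-lipschitz_on (closure \<Omega>) V) \<and>
     (AE x in lebesgue. x \<in> \<Omega> \<longrightarrow> (\<exists>D. (V has_derivative D) (at x) \<and> onorm D \<le> G))
     \<longrightarrow>
     (let uK = (\<lambda>K. (LINT x:\<omega>K K|lebesgue. u0 x) / mC VK \<alpha> K);
          us = (\<lambda>s. (LINT x:omega_v \<M> VK \<omega>Ks s|lebesgue. u0 x) / mV \<M> VK \<alpha> s);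
          ED = Energy p \<Omega> (piD \<M> Vt VK \<omega>K \<omega>Ks (\<lambda>K. V (xc K)) V)
                          (piD \<M> Vt VK \<omega>K \<omega>Ks uK us);
          C = F (LINT x:\<Omega>|lebesgue. \<bar>u0 x\<bar>) G
      in ED \<le> Energy p \<Omega> V u0 + ereal (C * h_mesh \<T>) \<and>
         Energy p \<Omega> V u0 + ereal (C * h_mesh \<T>) \<le> Energy p \<Omega> V u0 + ereal (C * diameter \<Omega>) \<and>
         ED < \<infinity>)"
proof (rule exI[of _ "\<lambda>a g. 2 * a * max g 0"], intro allI impI)
  fix \<Omega> :: "'a::euclidean_space set" and p :: "real \<Rightarrow> real" and u0 V :: "'a \<Rightarrow> real" and G :: real
    and \<M> xc Vt VK \<T> \<alpha> \<omega>K \<omega>Ks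
  assume H: "DIM('a) \<in> {2, 3} \<and>
     connected \<Omega> \<and> bounded \<Omega> \<and> polyhedral_open \<Omega> \<and>
     admissible_p p \<and>
     discretization \<Omega> \<M> xc Vt VK \<T> \<alpha> \<omega>K \<omega>Ks \<and>
     set_integrable lebesgue \<Omega> u0 \<and>
     (AE x in lebesgue. x \<in> \<Omega> \<longrightarrow> u0 x \<ge> 0) \<and>
     (LINT x:\<Omega>|lebesgue. u0 x) > 0 \<and>
     (\<integral>\<^sup>+ x\<in>\<Omega>. e2ennreal (Gam p (u0 x)) \<partial>lebesgue) < \<infinity> \<and>
     (\<exists>L. L-lipschitz_on (closure \<Omega>) V) \<and>
     (AE x in lebesgue. x \<in> \<Omega> \<longrightarrow> (\<exists>D. (V has_derivative D) (at x) \<and> onorm D \<le> G))"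
  then obtain L where L: "L-lipschitz_on (closure \<Omega>) V" by blast
  have oO: "open \<Omega>" using H by (simp add: polyhedral_open_def)
  from H have disc: "discretization \<Omega> \<M> xc Vt VK \<T> \<alpha> \<omega>K \<omega>Ks" and bdd: "bounded \<Omega>"
    and ad: "admissible_p p" and u0i: "set_integrable lebesgue \<Omega> u0"
    and nn: "AE x in lebesgue. x \<in> \<Omega> \<longrightarrow> u0 x \<ge> 0"
    and fin: "(\<integral>\<^sup>+ x\<in>\<Omega>. e2ennreal (Gam p (u0 x)) \<partial>lebesgue) < \<infinity>"
    and der: "AE x in lebesgue. x \<in> \<Omega> \<longrightarrow> (\<exists>D. (V has_derivative D) (at x) \<and> onorm D \<le> G)"
    by blast+
  show "let uK = (\<lambda>K. (LINT x:\<omega>K K|lebesgue. u0 x) / mC VK \<alpha> K);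
          us = (\<lambda>s. (LINT x:omega_v \<M> VK \<omega>Ks s|lebesgue. u0 x) / mV \<M> VK \<alpha> s);
          ED = Energy p \<Omega> (piD \<M> Vt VK \<omega>K \<omega>Ks (\<lambda>K. V (xc K)) V)
                          (piD \<M> Vt VK \<omega>K \<omega>Ks uK us);
          C = 2 * (LINT x:\<Omega>|lebesgue. \<bar>u0 x\<bar>) * max G 0
      in ED \<le> Energy p \<Omega> V u0 + ereal (C * h_mesh \<T>) \<and>
         Energy p \<Omega> V u0 + ereal (C * h_mesh \<T>) \<le> Energy p \<Omega> V u0 + ereal (C * diameter \<Omega>) \<and>
         ED < \<infinity>"
    by (rule main_bound[OF disc bdd oO ad u0i nn fin L der])
qed

end
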